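(* Let $t\in\mathbb{C}^\times$. A linear map $T\colon\mathcal{A}\to\mathbb{C}$ is a $g_t$-twisted trace if and only if $T$ vanishes on $\mathcal{A}_i$ for all $i\neq 0$ and, identifying $\mathcal{A}_0=\mathbb{C}[Z,Z^{-1}]$ with $\mathbb{C}[z,z^{-1}]$, \[ T\big(P(q^{-1}z)R(q^{-1}z)-tP(qz)R(qz)\big)=0\qquad\text{for all } R\in\mathbb{C}[z,z^{-1}]. \] Moreover, the space of $g_t$-twisted traces on $\mathcal{A}$ has dimension $n$.
   Context: Let $q\in\mathbb{C}$ with $0<|q|<1$. Let $P\in\mathbb{C}[z,z^{-1}]$ be a Laurent polynomial, $P=az^k+\dots+bz^l$ with $a,b\neq0$, $k\ge l$, and let $n=k-l$ (the number of nonzero roots of $P$ counted with multiplicity); assume $n>0$. The generalized $q$-Weyl algebra $\mathcal{A}=\mathcal{A}_P$ is the $\mathbb{C}$-algebra generated by $u,v,Z,Z^{-1}$ with relations $ZZ^{-1}=Z^{-1}Z=1$, $ZuZ^{-1}=q^2u$, $ZvZ^{-1}=q^{-2}v$, $uv=P(q^{-1}Z)$, $vu=P(qZ)$. For $i\in\mathbb{Z}$ let $\mathcal{A}_i=\{a\in\mathcal{A}: ZaZ^{-1}=q^{2i}a\}$; then $\mathcal{A}=\bigoplus_{i\in\mathbb{Z}}\mathcal{A}_i$, with $\mathcal{A}_i=u^i\mathbb{C}[Z,Z^{-1}]$ for $i\ge0$ and $\mathcal{A}_i=v^{-i}\mathbb{C}[Z,Z^{-1}]$ for $i\le 0$. For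 $t\in\mathbb{C}^\times$, $g_t$ denotes the automorphism of $\mathcal{A}$ with $g_t(u)=tu$, $g_t(v)=t^{-1}v$, $g_t(Z)=Z$. A linear map $T\colon\mathcal{A}\to\mathbb{C}$ is a $g_t$-twisted trace if $T(ab)=T(b\,g_t(a))$ for all $a,b\in\mathcal{A}$. *)

theory Defs
  imports Complex_Main "HOL-Library.Function_Algebras"
begin

text \<open>We work inside the skew Laurent polynomial ring over C[Z,Z^-1] in a variable u
  (u invertible), with Z u = q^2 u Z.  An element is a finitely supported coefficient
  function x :: int \<times> int \<Rightarrow> complex, where x (i,j) is the coefficient of u^i Z^j.
  The algebra A_P is the subalgebra generated by u, v, Z, Z^-1 with
  v = u^-1 P(q^-1 Z).\<close>

type_synonym elt = "int \<times> int \<Rightarrow> complex"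

definition supp :: "elt \<Rightarrow> (int \<times> int) set" where
  "supp x = {p. x p \<noteq> 0}"

text \<open>(u^a Z^c)(u^b Z^d) = q^(2bc) u^(a+b) Z^(c+d)\<close>
definition mult :: "complex \<Rightarrow> elt \<Rightarrow> elt \<Rightarrow> elt" where
  "mult q x y = (\<lambda>(i,j). \<Sum>p\<in>supp x.
       x p * y (i - fst p, j - snd p) * q powi (2 * (i - fst p) * snd p))"

definition smul :: "complex \<Rightarrow> elt \<Rightarrow> elt" where
  "smul c x = (\<lambda>p. c * x p)"

definition mono :: "int \<Rightarrow> int \<Rightarrow> elt" where
  "mono i j = (\<lambda>p. if p = (i,j) then 1 else 0)"

text \<open>A Laurent polynomial f (finitely supported coefficient function int \<Rightarrow> complex)
  evaluated at c Z, as an element of degree 0: f(cZ) = sum_j f_j c^j Z^j.\<close>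
definition lp :: "(int \<Rightarrow> complex) \<Rightarrow> complex \<Rightarrow> elt" where
  "lp f c = (\<lambda>(i,j). if i = 0 then f j * c powi j else 0)"

definition vgen :: "complex \<Rightarrow> (int \<Rightarrow> complex) \<Rightarrow> elt" where
  "vgen q P = mult q (mono (-1) 0) (lp P (inverse q))"

inductive_set qWeyl :: "complex \<Rightarrow> (int \<Rightarrow> complex) \<Rightarrow> elt set"
  for q :: complex and P :: "int \<Rightarrow> complex" where
  gen_one: "mono 0 0 \<in> qWeyl q P"
| gen_u: "mono 1 0 \<in> qWeyl q P"
| gen_v: "vgen q P \<in> qWeyl q P"
| gen_Z: "mono 0 1 \<in> qWeyl q P"
| gen_Zinv: "mono 0 (-1) \<in> qWeyl q P"
| add: "x \<in> qWeyl q P \<Longrightarrow> y \<in> qWeyl q P \<Longrightarrow> x + y \<in> qWeyl q P"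
| scal: "x \<in> qWeyl q P \<Longrightarrow> smul c x \<in> qWeyl q P"
| mul: "x \<in> qWeyl q P \<Longrightarrow> y \<in> qWeyl q P \<Longrightarrow> mult q x y \<in> qWeyl q P"

definition grade :: "complex \<Rightarrow> (int \<Rightarrow> complex) \<Rightarrow> int \<Rightarrow> elt set" where
  "grade q P i = {a \<in> qWeyl q P.
      mult q (mult q (mono 0 1) a) (mono 0 (-1)) = smul (q powi (2 * i)) a}"

text \<open>The automorphism g_t: u \<mapsto> t u, v \<mapsto> t^-1 v, Z \<mapsto> Z.\<close>
definition gt :: "complex \<Rightarrow> elt \<Rightarrow> elt" where
  "gt t x = (\<lambda>(i,j). t powi i * x (i,j))"

definition linear_on :: "elt set \<Rightarrow> (elt \<Rightarrow> complex) \<Rightarrow> bool" where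
  "linear_on A T \<longleftrightarrow> (\<forall>x\<in>A. \<forall>y\<in>A. T (x + y) = T x + T y)
                    \<and> (\<forall>c. \<forall>x\<in>A. T (smul c x) = c * T x)"

definition twisted_trace :: "complex \<Rightarrow> (int \<Rightarrow> complex) \<Rightarrow> complex \<Rightarrow> (elt \<Rightarrow> complex) \<Rightarrow> bool" where
  "twisted_trace q P t T \<longleftrightarrow>
     (\<forall>a\<in>qWeyl q P. \<forall>b\<in>qWeyl q P. T (mult q a b) = T (mult q b (gt t a)))"

definition lspan :: "(int \<Rightarrow> complex) \<Rightarrow> nat" where
  "lspan P = nat (Max {j. P j \<noteq> 0} - Min {j. P j \<noteq> 0})"

end

theory Submission
  imports Defs
begin

lemma sum_elt_apply: "(sum (f :: 'b \<Rightarrow> elt) S) p = (\<Sum>s\<in>S. f s p)"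
  by (induction S rule: infinite_finite_induct) auto

definition fin :: "elt \<Rightarrow> bool" where "fin x \<longleftrightarrow> finite (supp x)"

lemma mult_superset:
  assumes "finite A" "supp x \<subseteq> A"
  shows "mult q x y (i,j) = (\<Sum>p\<in>A. x p * y (i - fst p, j - snd p) * q powi (2 * (i - fst p) * snd p))"
proof -
  have "mult q x y (i,j) = (\<Sum>p\<in>supp x. x p * y (i - fst p, j - snd p) * q powi (2 * (i - fst p) * snd p))"
    by (simp add: mult_def)
  also have "\<dots> = (\<Sum>p\<in>A. x p * y (i - fst p, j - snd p) * q powi (2 * (i - fst p) * snd p))"
    by (rule sum.mono_neutral_left[OF assms]) (simp add: supp_def)
  finally show ?thesis .
qed

lemma mult_mono_left: "mult q (mono a c) y (i,j) = y (i - a, j - c) * q powi (2 * (i - a) * c)"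
  by (subst mult_superset[of "{(a,c)}"]) (auto simp: supp_def mono_def)

lemma mult_mono_right:
  assumes "fin y"
  shows "mult q y (mono b d) (i,j) = y (i - b, j - d) * q powi (2 * b * (j - d))"
proof -
  have "mult q y (mono b d) (i,j) = (\<Sum>p\<in>insert (i-b,j-d) (supp y).
     y p * mono b d (i - fst p, j - snd p) * q powi (2 * (i - fst p) * snd p))"
    by (rule mult_superset) (use assms in \<open>auto simp: fin_def\<close>)
  also have "\<dots> = (\<Sum>p\<in>insert (i-b,j-d) (supp y).
     (if p = (i-b,j-d) then y (i - b, j - d) * q powi (2 * b * (j - d)) else 0))"
  proof (rule sum.cong[OF refl])
    fix p :: "int \<times> int"
    obtain p1 p2 where p: "p = (p1,p2)" by (cases p)
    show "y p * mono b d (i - fst p, j - snd p) * q powi (2 * (i - fst p) * snd p) =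
      (if p = (i-b,j-d) then y (i - b, j - d) * q powi (2 * b * (j - d)) else 0)"
      unfolding p mono_def by auto
  qed
  also have "\<dots> = y (i - b, j - d) * q powi (2 * b * (j - d))"
    using assms unfolding fin_def by (simp add: sum.delta)
  finally show ?thesis .
qed

lemma supp_mult: "supp (mult q x y) \<subseteq> (\<lambda>(r,s). (fst r + fst s, snd r + snd s)) ` (supp x \<times> supp y)"
proof
  fix p assume pm: "p \<in> supp (mult q x y)"
  obtain i j where p: "p = (i,j)" by (cases p)
  have ne: "mult q x y (i,j) \<noteq> 0" using pm unfolding p supp_def by simp
  have "(\<Sum>r\<in>supp x. x r * y (i - fst r, j - snd r) * q powi (2 * (i - fst r) * snd r)) \<noteq> 0"
    using ne by (simp add: mult_def)
  then obtain r where r: "r \<in> supp x" "x r * y (i - fst r, j - snd r) * q powi (2 * (i - fst r) * snd r) \<noteq> 0"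
    by (rule sum.not_neutral_contains_not_neutral)
  have s: "(i - fst r, j - snd r) \<in> supp y" using r(2) unfolding supp_def by simp
  have "p = (\<lambda>(r,s). (fst r + fst s, snd r + snd s)) (r, (i - fst r, j - snd r))"
    unfolding p by simp
  with r(1) s show "p \<in> (\<lambda>(r,s). (fst r + fst s, snd r + snd s)) ` (supp x \<times> supp y)"
    by blast
qed

lemma fin_mult: "fin x \<Longrightarrow> fin y \<Longrightarrow> fin (mult q x y)"
  unfolding fin_def by (rule finite_subset[OF supp_mult]) (intro finite_imageI finite_cartesian_product)

lemma fin_add: "fin x \<Longrightarrow> fin y \<Longrightarrow> fin (x + y)"
  unfolding fin_def supp_def by (rule finite_subset[of _ "{p. x p \<noteq> 0} \<union> {p. y p \<noteq> 0}"]) (auto simp: plus_fun_def)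

lemma fin_smul: "fin x \<Longrightarrow> fin (smul c x)"
  unfolding fin_def supp_def smul_def by (rule finite_subset[of _ "{p. x p \<noteq> 0}"]) auto

lemma fin_zero: "fin 0" unfolding fin_def supp_def by simp

lemma fin_mono: "fin (mono a b)"
  unfolding fin_def supp_def mono_def by (rule finite_subset[of _ "{(a,b)}"]) auto

lemma fin_sum: "finite S \<Longrightarrow> (\<And>s. s \<in> S \<Longrightarrow> fin (f s)) \<Longrightarrow> fin (sum f S)"
  by (induction S rule: finite_induct) (auto intro: fin_add fin_zero)

lemma supp_lp: "supp (lp f c) \<subseteq> (\<lambda>j. (0,j)) ` {j. f j \<noteq> 0}"
  unfolding supp_def lp_def by (auto split: if_splits)

lemma fin_lp: "finite {j. f j \<noteq> 0} \<Longrightarrow> fin (lp f c)"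
  unfolding fin_def by (rule finite_subset[OF supp_lp]) (intro finite_imageI)

lemma vgen_eq: "vgen q P = (\<lambda>(i,j). if i = -1 then P j * (inverse q) powi j else 0)"
proof (rule ext, clarify)
  fix i j :: int
  show "vgen q P (i,j) = (if i = -1 then P j * (inverse q) powi j else 0)"
    unfolding vgen_def mult_mono_left by (simp add: lp_def)
qed

lemma fin_vgen: "finite {j. P j \<noteq> 0} \<Longrightarrow> fin (vgen q P)"
  unfolding vgen_def by (intro fin_mult fin_mono fin_lp)

lemma qWeyl_fin:
  assumes fp: "finite {j. P j \<noteq> 0}"
  shows "x \<in> qWeyl q P \<Longrightarrow> fin x"
proof (induction rule: qWeyl.induct)
qed (blast intro: fin_mono fin_vgen[OF fp] fin_add fin_smul fin_mult)+

lemma smul_zero_elt: "smul 0 x = 0" by (simp add: smul_def fun_eq_iff)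

lemma qW_zero: "0 \<in> qWeyl q P"
  using qWeyl.scal[OF qWeyl.gen_one, where c=0] by (simp add: smul_zero_elt)

lemma qW_diff: "x \<in> qWeyl q P \<Longrightarrow> y \<in> qWeyl q P \<Longrightarrow> x - y \<in> qWeyl q P"
proof -
  assume "x \<in> qWeyl q P" "y \<in> qWeyl q P"
  hence "x + smul (-1) y \<in> qWeyl q P" by (intro qWeyl.add qWeyl.scal)
  moreover have "x + smul (-1) y = x - y" by (simp add: smul_def fun_eq_iff)
  ultimately show ?thesis by simp
qed

lemma qW_sum: "finite S \<Longrightarrow> (\<And>s. s \<in> S \<Longrightarrow> f s \<in> qWeyl q P) \<Longrightarrow> sum f S \<in> qWeyl q P"
  by (induction S rule: finite_induct) (auto intro: qWeyl.add qW_zero)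

lemma mono_mult_mono: "mult q (mono a c) (mono b d) = smul (q powi (2 * b * c)) (mono (a+b) (c+d))"
proof (rule ext, clarify)
  fix i j :: int
  show "mult q (mono a c) (mono b d) (i,j) = smul (q powi (2 * b * c)) (mono (a+b) (c+d)) (i,j)"
    unfolding mult_mono_left by (auto simp: mono_def smul_def)
qed

lemma qW_mono0: "mono 0 j \<in> qWeyl q P"
proof (induction j rule: int_induct[where k=0])
  case base show ?case by (rule qWeyl.gen_one)
next
  case (step1 i)
  have "mult q (mono 0 i) (mono 0 1) = mono 0 (i+1)"
    by (simp add: mono_mult_mono smul_def)
  with step1 qWeyl.gen_Z show ?case by (metis qWeyl.mul)
next
  case (step2 i)
  have "mult q (mono 0 i) (mono 0 (-1)) = mono 0 (i - 1)"
    by (simp add: mono_mult_mono smul_def)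
  with step2 qWeyl.gen_Zinv show ?case by (metis qWeyl.mul)
qed

lemma qW_mono_pos: "i \<ge> 0 \<Longrightarrow> mono i j \<in> qWeyl q P"
proof (induction i rule: int_ge_induct)
  case base show ?case by (rule qW_mono0)
next
  case (step i)
  have "mult q (mono 1 0) (mono i j) = mono (i+1) j"
    by (simp add: mono_mult_mono smul_def add.commute)
  with step qWeyl.gen_u show ?case by (metis qWeyl.mul)
qed

lemma lp_as_sum:
  assumes "finite {j. f j \<noteq> 0}"
  shows "lp f c = (\<Sum>j\<in>{j. f j \<noteq> 0}. smul (f j * c powi j) (mono 0 j))"
proof (rule ext, clarify)
  fix i j :: int
  have "(\<Sum>k\<in>{j. f j \<noteq> 0}. smul (f k * c powi k) (mono 0 k)) (i,j) =
        (\<Sum>k\<in>{j. f j \<noteq> 0}. if k = j then (if i = 0 then f j * c powi j else 0) else 0)"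
    unfolding sum_elt_apply by (rule sum.cong) (auto simp: smul_def mono_def)
  also have "\<dots> = lp f c (i,j)"
    using assms by (simp add: sum.delta lp_def)
  finally show "lp f c (i,j) = (\<Sum>k\<in>{j. f j \<noteq> 0}. smul (f k * c powi k) (mono 0 k)) (i,j)" ..
qed

lemma qW_lp: "finite {j. f j \<noteq> 0} \<Longrightarrow> lp f c \<in> qWeyl q P"
  by (subst lp_as_sum) (auto intro!: qW_sum qWeyl.scal qW_mono0)

lemma lin_zero: "linear_on (qWeyl q P) T \<Longrightarrow> T 0 = 0"
  unfolding linear_on_def using qWeyl.gen_one[of q P]
  by (metis mult_zero_left smul_zero_elt)

lemma lin_add: "linear_on (qWeyl q P) T \<Longrightarrow> x \<in> qWeyl q P \<Longrightarrow> y \<in> qWeyl q P \<Longrightarrow> T (x + y) = T x + T y"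
  unfolding linear_on_def by blast

lemma lin_smul: "linear_on (qWeyl q P) T \<Longrightarrow> x \<in> qWeyl q P \<Longrightarrow> T (smul c x) = c * T x"
  unfolding linear_on_def by blast

lemma lin_diff: "linear_on (qWeyl q P) T \<Longrightarrow> x \<in> qWeyl q P \<Longrightarrow> y \<in> qWeyl q P \<Longrightarrow> T (x - y) = T x - T y"
proof -
  assume l: "linear_on (qWeyl q P) T" and x: "x \<in> qWeyl q P" and y: "y \<in> qWeyl q P"
  have e: "x - y = x + smul (-1) y" by (simp add: smul_def fun_eq_iff)
  have "T (x - y) = T x + T (smul (-1) y)" unfolding e by (rule lin_add[OF l x qWeyl.scal[OF y]])
  thus ?thesis using lin_smul[OF l y] by simp
qed

lemma lin_sum: assumes l: "linear_on (qWeyl q P) T"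
  shows "finite S \<Longrightarrow> (\<And>s. s \<in> S \<Longrightarrow> f s \<in> qWeyl q P)
   \<Longrightarrow> T (sum f S) = (\<Sum>s\<in>S. T (f s))"
proof (induction S rule: finite_induct)
  case empty show ?case by (simp only: sum.empty lin_zero[OF l])
next
  case (insert s S)
  have "T (sum f (insert s S)) = T (f s + sum f S)" by (simp only: sum.insert[OF insert(1,2)])
  also have "\<dots> = T (f s) + T (sum f S)" using insert by (intro lin_add[OF l] qW_sum) auto
  also have "\<dots> = T (f s) + (\<Sum>s\<in>S. T (f s))" using insert by simp
  also have "\<dots> = (\<Sum>s\<in>insert s S. T (f s))" by (simp add: sum.insert[OF insert(1,2)])
  finally show ?case .
qed

lemma mult_add_left: "fin x \<Longrightarrow> fin x' \<Longrightarrow> mult q (x + x') y = mult q x y + mult q x' y"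
proof (rule ext, clarify)
  fix i j :: int
  assume f: "fin x" "fin x'"
  let ?A = "supp x \<union> supp x'"
  have A: "finite ?A" using f unfolding fin_def by simp
  have s: "supp (x + x') \<subseteq> ?A" by (auto simp: supp_def)
  show "mult q (x + x') y (i,j) = (mult q x y + mult q x' y) (i,j)"
    unfolding plus_fun_apply mult_superset[OF A s] mult_superset[OF A Un_upper1] mult_superset[OF A Un_upper2]
    by (simp add: sum.distrib[symmetric] algebra_simps)
qed

lemma mult_add_right: "mult q x (y + y') = mult q x y + mult q x y'"
  by (rule ext) (simp add: mult_def split_def sum.distrib[symmetric] algebra_simps)

lemma mult_smul_left: "fin x \<Longrightarrow> mult q (smul c x) y = smul c (mult q x y)"
proof (rule ext, clarify)
  fix i j :: int
  assume f: "fin x"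
  have A: "finite (supp x)" using f unfolding fin_def by simp
  have s: "supp (smul c x) \<subseteq> supp x" by (auto simp: supp_def smul_def)
  have "mult q (smul c x) y (i,j) = (\<Sum>p\<in>supp x. smul c x p * y (i - fst p, j - snd p) * q powi (2 * (i - fst p) * snd p))"
    by (rule mult_superset[OF A s])
  also have "\<dots> = smul c (mult q x y) (i,j)"
    unfolding mult_superset[OF A order_refl] smul_def
    by (simp add: sum_distrib_left algebra_simps)
  finally show "mult q (smul c x) y (i,j) = smul c (mult q x y) (i,j)" .
qed

lemma mult_smul_right: "mult q x (smul c y) = smul c (mult q x y)"
  by (rule ext) (simp add: mult_def smul_def split_def sum_distrib_left algebra_simps)

lemma mult_zero_left: "mult q 0 y = 0"
proof (rule ext, clarify)
  fix i j show "mult q 0 y (i,j) = 0 (i,j)" by (simp add: mult_def supp_def)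
qed

lemma mult_zero_right: "mult q x 0 = 0"
proof (rule ext, clarify)
  fix i j show "mult q x 0 (i,j) = 0 (i,j)" by (simp add: mult_def)
qed

lemma mult_sum_left: "finite S \<Longrightarrow> (\<And>s. s \<in> S \<Longrightarrow> fin (f s)) \<Longrightarrow>
   mult q (sum f S) y = (\<Sum>s\<in>S. mult q (f s) y)"
proof (induction S rule: finite_induct)
  case empty show ?case by (simp only: sum.empty mult_zero_left)
next
  case (insert s S)
  have "mult q (sum f (insert s S)) y = mult q (f s + sum f S) y" by (simp only: sum.insert[OF insert(1,2)])
  also have "\<dots> = mult q (f s) y + mult q (sum f S) y" using insert by (intro mult_add_left fin_sum) auto
  also have "\<dots> = mult q (f s) y + (\<Sum>s\<in>S. mult q (f s) y)" using insert by simp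
  also have "\<dots> = (\<Sum>s\<in>insert s S. mult q (f s) y)" by (simp only: sum.insert[OF insert(1,2)])
  finally show ?case .
qed

lemma mult_sum_right: "finite S \<Longrightarrow> mult q x (sum f S) = (\<Sum>s\<in>S. mult q x (f s))"
proof (induction S rule: finite_induct)
  case empty show ?case by (simp only: sum.empty mult_zero_right)
next
  case (insert s S)
  show ?case by (simp only: sum.insert[OF insert(1,2)] mult_add_right insert(3))
qed

lemma powi_mult_eq:
  fixes q :: complex
  assumes "q \<noteq> 0" "a + b = c + d"
  shows "q powi a * q powi b = q powi c * q powi d"
  using assms by (simp add: power_int_add[symmetric])

lemma mult_assoc:
  assumes fx: "fin x" and fy: "fin y" and fz: "fin z" and q0: "q \<noteq> 0"
  shows "mult q (mult q x y) z = mult q x (mult q y z)"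
proof (rule ext, clarify)
  fix i j :: int
  define A where "A = supp x"
  define B where "B = supp y"
  define add :: "int \<times> int \<Rightarrow> int \<times> int \<Rightarrow> int \<times> int" where "add = (\<lambda>r s. (fst r + fst s, snd r + snd s))"
  define D where "D = (\<lambda>(r,s). add r s) ` (A \<times> B)"
  have fA: "finite A" and fB: "finite B" using fx fy by (auto simp: fin_def A_def B_def)
  have fD: "finite D" unfolding D_def using fA fB by auto
  have sD: "supp (mult q x y) \<subseteq> D" unfolding D_def A_def B_def add_def using supp_mult by blast
  define G where "G = (\<lambda>r p. x r * y (fst p - fst r, snd p - snd r) * q powi (2 * (fst p - fst r) * snd r)
       * (z (i - fst p, j - snd p) * q powi (2 * (i - fst p) * snd p)))"
  have "mult q (mult q x y) z (i,j) =
     (\<Sum>p\<in>D. mult q x y p * z (i - fst p, j - snd p) * q powi (2 * (i - fst p) * snd p))"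
    by (rule mult_superset[OF fD sD])
  also have "\<dots> = (\<Sum>p\<in>D. \<Sum>r\<in>A. G r p)"
  proof (rule sum.cong[OF refl])
    fix p :: "int \<times> int"
    have "mult q x y p = mult q x y (fst p, snd p)" by simp
    also have "\<dots> = (\<Sum>r\<in>A. x r * y (fst p - fst r, snd p - snd r) * q powi (2 * (fst p - fst r) * snd r))"
      by (rule mult_superset[OF fA]) (simp add: A_def)
    finally show "mult q x y p * z (i - fst p, j - snd p) * q powi (2 * (i - fst p) * snd p) = (\<Sum>r\<in>A. G r p)"
      unfolding G_def by (simp add: sum_distrib_right mult.assoc)
  qed
  also have "\<dots> = (\<Sum>r\<in>A. \<Sum>p\<in>D. G r p)" by (rule sum.swap)
  also have "\<dots> = (\<Sum>r\<in>A. \<Sum>s\<in>B. G r (add r s))"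
  proof (rule sum.cong[OF refl])
    fix r assume rA: "r \<in> A"
    have inj: "inj_on (add r) B" unfolding add_def by (rule inj_onI) (auto simp: prod_eq_iff)
    have "(\<Sum>s\<in>B. G r (add r s)) = (\<Sum>p\<in>add r ` B. G r p)"
      by (simp add: sum.reindex[OF inj])
    also have "\<dots> = (\<Sum>p\<in>D. G r p)"
    proof (rule sum.mono_neutral_left[OF fD])
      show "add r ` B \<subseteq> D" unfolding D_def using rA by auto
      show "\<forall>p\<in>D - add r ` B. G r p = 0"
      proof
        fix p assume p: "p \<in> D - add r ` B"
        have "(fst p - fst r, snd p - snd r) \<notin> B"
        proof
          assume "(fst p - fst r, snd p - snd r) \<in> B"
          moreover have "p = add r (fst p - fst r, snd p - snd r)" by (simp add: add_def)
          ultimately show False using p by blast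
        qed
        hence "y (fst p - fst r, snd p - snd r) = 0" by (simp add: B_def supp_def)
        thus "G r p = 0" by (simp add: G_def)
      qed
    qed
    finally show "(\<Sum>p\<in>D. G r p) = (\<Sum>s\<in>B. G r (add r s))" ..
  qed
  also have "\<dots> = (\<Sum>r\<in>A. x r * mult q y z (i - fst r, j - snd r) * q powi (2 * (i - fst r) * snd r))"
  proof (rule sum.cong[OF refl])
    fix r assume rA: "r \<in> A"
    have "mult q y z (i - fst r, j - snd r) = (\<Sum>s\<in>B. y s * z (i - fst r - fst s, j - snd r - snd s) *
        q powi (2 * (i - fst r - fst s) * snd s))"
      by (rule mult_superset[OF fB]) (simp add: B_def)
    hence e: "x r * mult q y z (i - fst r, j - snd r) * q powi (2 * (i - fst r) * snd r) =
      (\<Sum>s\<in>B. x r * (y s * z (i - fst r - fst s, j - snd r - snd s) *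
        q powi (2 * (i - fst r - fst s) * snd s)) * q powi (2 * (i - fst r) * snd r))"
      by (simp add: sum_distrib_left sum_distrib_right)
    show "(\<Sum>s\<in>B. G r (add r s)) = x r * mult q y z (i - fst r, j - snd r) * q powi (2 * (i - fst r) * snd r)"
      unfolding e
    proof (rule sum.cong[OF refl])
      fix s
      have pw: "q powi (2 * fst s * snd r) * q powi (2 * (i - (fst r + fst s)) * (snd r + snd s)) =
            q powi (2 * (i - fst r - fst s) * snd s) * q powi (2 * (i - fst r) * snd r)"
        by (rule powi_mult_eq[OF q0]) (simp add: algebra_simps)
      have "G r (add r s) = x r * y s * z (i - fst r - fst s, j - snd r - snd s) *
         (q powi (2 * fst s * snd r) * q powi (2 * (i - (fst r + fst s)) * (snd r + snd s)))"
        by (simp add: G_def add_def algebra_simps)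
      also have "\<dots> = x r * (y s * z (i - fst r - fst s, j - snd r - snd s) *
        q powi (2 * (i - fst r - fst s) * snd s)) * q powi (2 * (i - fst r) * snd r)"
        unfolding pw by (simp add: algebra_simps)
      finally show "G r (add r s) = x r * (y s * z (i - fst r - fst s, j - snd r - snd s) *
        q powi (2 * (i - fst r - fst s) * snd s)) * q powi (2 * (i - fst r) * snd r)" .
    qed
  qed
  also have "\<dots> = mult q x (mult q y z) (i,j)"
    by (rule mult_superset[symmetric, OF fA]) (simp add: A_def)
  finally show "mult q (mult q x y) z (i,j) = mult q x (mult q y z) (i,j)" .
qed

lemma supp_gt: "supp (gt t x) \<subseteq> supp x"
  by (auto simp: supp_def gt_def)

lemma gt_mult:
  assumes fx: "fin x" and t0: "t \<noteq> 0"
  shows "gt t (mult q x y) = mult q (gt t x) (gt t y)"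
proof (rule ext, clarify)
  fix i j :: int
  have fA: "finite (supp x)" using fx by (simp add: fin_def)
  have "mult q (gt t x) (gt t y) (i,j) = (\<Sum>p\<in>supp x. gt t x p * gt t y (i - fst p, j - snd p) * q powi (2 * (i - fst p) * snd p))"
    by (rule mult_superset[OF fA supp_gt])
  also have "\<dots> = (\<Sum>p\<in>supp x. t powi i * (x p * y (i - fst p, j - snd p) * q powi (2 * (i - fst p) * snd p)))"
  proof (rule sum.cong[OF refl])
    fix p :: "int \<times> int"
    have "t powi (fst p) * t powi (i - fst p) = t powi i"
      using t0 by (simp add: power_int_add[symmetric])
    thus "gt t x p * gt t y (i - fst p, j - snd p) * q powi (2 * (i - fst p) * snd p) =
      t powi i * (x p * y (i - fst p, j - snd p) * q powi (2 * (i - fst p) * snd p))"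
      by (cases p) (simp add: gt_def algebra_simps)
  qed
  also have "\<dots> = gt t (mult q x y) (i,j)"
    by (simp add: gt_def mult_superset[OF fA order_refl] sum_distrib_left)
  finally show "gt t (mult q x y) (i,j) = mult q (gt t x) (gt t y) (i,j)" ..
qed

lemma gt_add: "gt t (x + y) = gt t x + gt t y"
  by (rule ext) (simp add: gt_def split_def algebra_simps)

lemma gt_smul: "gt t (smul c x) = smul c (gt t x)"
  by (rule ext) (simp add: gt_def smul_def split_def)

lemma gt_mono: "gt t (mono a b) = smul (t powi a) (mono a b)"
  by (rule ext) (auto simp: gt_def smul_def mono_def split_def)

lemma gt_vgen: "gt t (vgen q P) = smul (t powi (-1)) (vgen q P)"
  by (rule ext) (auto simp: gt_def smul_def vgen_eq split_def)

lemma gt_qW: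
  assumes fp: "finite {j. P j \<noteq> 0}" and t0: "t \<noteq> 0"
  shows "x \<in> qWeyl q P \<Longrightarrow> gt t x \<in> qWeyl q P"
proof (induction rule: qWeyl.induct)
  case gen_one thus ?case unfolding gt_mono by (intro qWeyl.scal qWeyl.intros)
next
  case gen_u thus ?case unfolding gt_mono by (intro qWeyl.scal qWeyl.intros)
next
  case gen_v thus ?case unfolding gt_vgen by (intro qWeyl.scal qWeyl.intros)
next
  case gen_Z thus ?case unfolding gt_mono by (intro qWeyl.scal qWeyl.intros)
next
  case gen_Zinv thus ?case unfolding gt_mono by (intro qWeyl.scal qWeyl.intros)
next
  case (add x y) thus ?case unfolding gt_add by (intro qWeyl.add)
next
  case (scal x c) thus ?case unfolding gt_smul by (intro qWeyl.scal)
next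
  case (mul x y) thus ?case unfolding gt_mult[OF qWeyl_fin[OF fp mul(1)] t0] by (intro qWeyl.mul)
qed

definition rowelt :: "elt \<Rightarrow> int \<Rightarrow> elt" where
  "rowelt x a = (\<lambda>(i,j). if i = a then x (i,j) else 0)"

lemma rowelt_apply: "rowelt x a (i,j) = (if i = a then x (i,j) else 0)"
  by (simp add: rowelt_def)

lemma fin_rowelt: "fin x \<Longrightarrow> fin (rowelt x a)"
  unfolding fin_def supp_def by (rule finite_subset[of _ "{p. x p \<noteq> 0}"]) (auto simp: rowelt_def split: if_splits)

lemma rowelt_add: "rowelt (x + y) a = rowelt x a + rowelt y a"
  by (rule ext) (simp add: rowelt_def split_def)

lemma rowelt_smul: "rowelt (smul c x) a = smul c (rowelt x a)"
  by (rule ext) (simp add: rowelt_def smul_def split_def)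

lemma rowelt_zero: "rowelt 0 a = 0"
  by (rule ext) (simp add: rowelt_def split_def)

lemma rowelt_sum: "finite S \<Longrightarrow> rowelt (sum f S) a = (\<Sum>s\<in>S. rowelt (f s) a)"
proof (induction S rule: finite_induct)
  case empty show ?case by (simp only: sum.empty rowelt_zero)
next
  case (insert s S)
  show ?case by (simp only: sum.insert[OF insert(1,2)] rowelt_add insert(3))
qed

lemma sum_rowelt:
  assumes "finite I" "fst ` supp x \<subseteq> I"
  shows "x = (\<Sum>a\<in>I. rowelt x a)"
proof (rule ext, clarify)
  fix i j :: int
  have "(\<Sum>a\<in>I. rowelt x a) (i,j) = (\<Sum>a\<in>I. if a = i then x (i,j) else 0)"
    unfolding sum_elt_apply by (rule sum.cong) (auto simp: rowelt_def)
  also have "\<dots> = x (i,j)"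
  proof (cases "i \<in> I")
    case True thus ?thesis using assms(1) by (simp add: sum.delta')
  next
    case False
    hence "(i,j) \<notin> supp x" using assms(2) by force
    thus ?thesis using False assms(1) by (simp add: sum.delta' supp_def)
  qed
  finally show "x (i,j) = (\<Sum>a\<in>I. rowelt x a) (i,j)" ..
qed

lemma rowelt_onrow:
  assumes "\<And>i j. i \<noteq> b \<Longrightarrow> x (i,j) = 0"
  shows "rowelt x a = (if a = b then x else 0)"
  by (rule ext) (auto simp: rowelt_def split_def assms)

lemma mult_rowelt_rowelt:
  assumes "i \<noteq> a + b"
  shows "mult q (rowelt x a) (rowelt y b) (i,j) = 0"
proof -
  have "(\<Sum>p\<in>supp (rowelt x a). rowelt x a p * rowelt y b (i - fst p, j - snd p) * q powi (2 * (i - fst p) * snd p)) = 0"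
  proof (rule sum.neutral, rule ballI)
    fix p assume p: "p \<in> supp (rowelt x a)"
    have "fst p = a"
    proof (rule ccontr)
      assume "fst p \<noteq> a" hence "rowelt x a p = 0" by (cases p) (simp add: rowelt_def)
      thus False using p by (simp add: supp_def)
    qed
    hence "rowelt y b (i - fst p, j - snd p) = 0" using assms by (simp add: rowelt_def)
    thus "rowelt x a p * rowelt y b (i - fst p, j - snd p) * q powi (2 * (i - fst p) * snd p) = 0" by simp
  qed
  thus ?thesis by (simp add: mult_def)
qed

lemma rowelt_mult_rowelt:
  "rowelt (mult q (rowelt x a) (rowelt y b)) c = (if c = a + b then mult q (rowelt x a) (rowelt y b) else 0)"
  by (rule rowelt_onrow) (rule mult_rowelt_rowelt)

lemma rowelt_mono: "rowelt (mono b d) a = (if a = b then mono b d else 0)"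
  by (rule rowelt_onrow) (simp add: mono_def)

lemma rowelt_qW:
  assumes fp: "finite {j. P j \<noteq> 0}"
  shows "x \<in> qWeyl q P \<Longrightarrow> rowelt x a \<in> qWeyl q P"
proof (induction arbitrary: a rule: qWeyl.induct)
  case gen_one thus ?case by (simp add: rowelt_mono qW_zero qWeyl.intros)
next
  case gen_u thus ?case by (simp add: rowelt_mono qW_zero qWeyl.intros)
next
  case gen_v
  have "rowelt (vgen q P) a = (if a = -1 then vgen q P else 0)"
    by (rule rowelt_onrow) (simp add: vgen_eq)
  thus ?case by (simp add: qW_zero qWeyl.intros)
next
  case gen_Z thus ?case by (simp add: rowelt_mono qW_zero qWeyl.intros)
next
  case gen_Zinv thus ?case by (simp add: rowelt_mono qW_zero qWeyl.intros)
next
  case (add x y) thus ?case by (simp only: rowelt_add qWeyl.add)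
next
  case (scal x c) thus ?case by (simp only: rowelt_smul qWeyl.scal)
next
  case (mul x y)
  have fx: "fin x" and fy: "fin y" using qWeyl_fin[OF fp] mul by auto
  define I where "I = fst ` supp x"
  define J where "J = fst ` supp y"
  have fI: "finite I" and fJ: "finite J" using fx fy by (auto simp: I_def J_def fin_def)
  have "mult q x y = mult q (\<Sum>b\<in>I. rowelt x b) (\<Sum>c\<in>J. rowelt y c)"
    using sum_rowelt[OF fI, of x] sum_rowelt[OF fJ, of y] by (simp add: I_def J_def)
  also have "\<dots> = (\<Sum>b\<in>I. \<Sum>c\<in>J. mult q (rowelt x b) (rowelt y c))"
    by (simp add: mult_sum_left[OF fI] fin_sum[OF fJ] fin_rowelt fy fx mult_sum_right[OF fJ] sum.swap[of _ J])
  finally have e: "rowelt (mult q x y) a = (\<Sum>b\<in>I. \<Sum>c\<in>J. rowelt (mult q (rowelt x b) (rowelt y c)) a)"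
    by (simp add: rowelt_sum fI fJ)
  show ?case unfolding e rowelt_mult_rowelt
    by (intro qW_sum fI fJ) (auto intro: qWeyl.mul mul.IH qW_zero)
qed

lemma powi_ne_one:
  fixes q :: complex
  assumes "0 < norm q" "norm q < 1" "k \<noteq> 0"
  shows "q powi k \<noteq> 1"
proof
  assume h: "q powi k = 1"
  have "norm q powi k = 1" using h by (metis norm_one norm_power_int)
  show False
  proof (cases "k > 0")
    case True
    hence "norm q powi k = norm q ^ nat k" by (simp add: power_int_def)
    also have "\<dots> < 1" using assms True by (subst power_less_one_iff) auto
    finally show False using \<open>norm q powi k = 1\<close> by simp
  next
    case False
    hence "k < 0" using assms by simp
    hence "norm q powi k = inverse (norm q ^ nat (-k))" by (simp add: power_int_def power_inverse)
    moreover have "norm q ^ nat (-k) < 1" using assms \<open>k < 0\<close> by (subst power_less_one_iff) auto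
    moreover have "norm q ^ nat (-k) > 0" using assms by simp
    ultimately have "norm q powi k > 1" by (simp add: one_less_inverse)
    thus False using \<open>norm q powi k = 1\<close> by simp
  qed
qed

lemma powi_inj:
  fixes q :: complex
  assumes "0 < norm q" "norm q < 1" "q powi a = q powi b"
  shows "a = b"
proof (rule ccontr)
  assume "a \<noteq> b"
  have q0: "q \<noteq> 0" using assms by auto
  have "q powi (a - b) = q powi a / q powi b" using q0 by (simp add: power_int_diff)
  also have "\<dots> = 1" using assms(3) q0 by simp
  finally show False using powi_ne_one[OF assms(1,2)] \<open>a \<noteq> b\<close> by simp
qed

lemma onrow_grade:
  assumes fp: "finite {j. P j \<noteq> 0}" and r: "r \<in> qWeyl q P"
    and onrow: "\<And>i' j. i' \<noteq> i \<Longrightarrow> r (i',j) = 0"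
  shows "r \<in> grade q P i"
proof -
  have fr: "fin r" using qWeyl_fin[OF fp r] .
  have "mult q (mult q (mono 0 1) r) (mono 0 (-1)) = smul (q powi (2 * i)) r"
  proof (rule ext, clarify)
    fix a b :: int
    show "mult q (mult q (mono 0 1) r) (mono 0 (-1)) (a,b) = smul (q powi (2 * i)) r (a,b)"
      unfolding mult_mono_right[OF fin_mult[OF fin_mono fr]] mult_mono_left
      by (cases "a = i") (auto simp: smul_def onrow)
  qed
  thus ?thesis using r unfolding grade_def by simp
qed

lemma T_row0:
  assumes fp: "finite {j. P j \<noteq> 0}" and l: "linear_on (qWeyl q P) T"
    and V: "\<forall>i. i \<noteq> 0 \<longrightarrow> (\<forall>x\<in>grade q P i. T x = 0)"
    and x: "x \<in> qWeyl q P"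
  shows "T x = T (rowelt x 0)"
proof -
  define I where "I = insert 0 (fst ` supp x)"
  have fI: "finite I" using qWeyl_fin[OF fp x] by (simp add: I_def fin_def)
  have "x = (\<Sum>a\<in>I. rowelt x a)" by (rule sum_rowelt[OF fI]) (auto simp: I_def)
  hence "T x = (\<Sum>a\<in>I. T (rowelt x a))"
    using lin_sum[OF l fI, of "rowelt x"] rowelt_qW[OF fp x] by simp
  also have "\<dots> = (\<Sum>a\<in>I. if a = 0 then T (rowelt x 0) else 0)"
  proof (rule sum.cong[OF refl])
    fix a assume "a \<in> I"
    show "T (rowelt x a) = (if a = 0 then T (rowelt x 0) else 0)"
    proof (cases "a = 0")
      case False
      have "rowelt x a \<in> grade q P a"
        by (rule onrow_grade[OF fp rowelt_qW[OF fp x]]) (simp add: rowelt_def)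
      thus ?thesis using V False by auto
    qed simp
  qed
  also have "\<dots> = T (rowelt x 0)" using fI by (simp add: sum.delta' I_def)
  finally show ?thesis .
qed

lemma sum_fun_apply': "(sum (f :: 'c \<Rightarrow> 'a \<Rightarrow> 'b::comm_monoid_add) S) p = (\<Sum>s\<in>S. f s p)"
  by (induction S rule: infinite_finite_induct) auto

definition lfin :: "(int \<Rightarrow> complex) \<Rightarrow> bool" where "lfin f \<longleftrightarrow> finite {j. f j \<noteq> 0}"
definition conv :: "(int \<Rightarrow> complex) \<Rightarrow> (int \<Rightarrow> complex) \<Rightarrow> int \<Rightarrow> complex" where
  "conv f g = (\<lambda>j. \<Sum>k\<in>{k. f k \<noteq> 0}. f k * g (j - k))"
definition scl :: "(int \<Rightarrow> complex) \<Rightarrow> complex \<Rightarrow> int \<Rightarrow> complex" where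
  "scl f \<mu> = (\<lambda>j. f j * \<mu> powi j)"
definition row :: "elt \<Rightarrow> int \<Rightarrow> int \<Rightarrow> complex" where
  "row x a = (\<lambda>j. x (a,j))"
definition delta :: "int \<Rightarrow> complex" where "delta = (\<lambda>j. if j = 0 then 1 else 0)"
definition pd :: "(int \<Rightarrow> complex) \<Rightarrow> (int \<Rightarrow> complex) \<Rightarrow> bool" where
  "pd p f \<longleftrightarrow> (\<exists>s. lfin s \<and> f = conv p s)"

lemma conv_superset:
  assumes "finite A" "{k. f k \<noteq> 0} \<subseteq> A"
  shows "conv f g j = (\<Sum>k\<in>A. f k * g (j - k))"
  unfolding conv_def by (rule sum.mono_neutral_left[OF assms]) auto

lemma lfin_conv: "lfin f \<Longrightarrow> lfin g \<Longrightarrow> lfin (conv f g)"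
proof -
  assume ff: "lfin f" and fg: "lfin g"
  have "{j. conv f g j \<noteq> 0} \<subseteq> (\<lambda>(a,b). a + b) ` ({k. f k \<noteq> 0} \<times> {k. g k \<noteq> 0})"
  proof
    fix j assume "j \<in> {j. conv f g j \<noteq> 0}"
    hence "(\<Sum>k\<in>{k. f k \<noteq> 0}. f k * g (j - k)) \<noteq> 0" by (simp add: conv_def)
    then obtain k where k: "k \<in> {k. f k \<noteq> 0}" "f k * g (j - k) \<noteq> 0"
      by (rule sum.not_neutral_contains_not_neutral)
    have "j = (\<lambda>(a,b). a + b) (k, j - k)" by simp
    moreover have "(k, j - k) \<in> {k. f k \<noteq> 0} \<times> {k. g k \<noteq> 0}" using k by simp
    ultimately show "j \<in> (\<lambda>(a,b). a + b) ` ({k. f k \<noteq> 0} \<times> {k. g k \<noteq> 0})" by blast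
  qed
  moreover have "finite ((\<lambda>(a,b). a + b) ` ({k. f k \<noteq> 0} \<times> {k. g k \<noteq> 0}))"
    using ff fg unfolding lfin_def by (intro finite_imageI finite_cartesian_product)
  ultimately show ?thesis unfolding lfin_def by (rule finite_subset)
qed

lemma lfin_scl: "lfin f \<Longrightarrow> lfin (scl f \<mu>)"
  unfolding lfin_def scl_def by (rule finite_subset[of _ "{j. f j \<noteq> 0}"]) auto

lemma lfin_add: "lfin f \<Longrightarrow> lfin g \<Longrightarrow> lfin (f + g)"
  unfolding lfin_def by (rule finite_subset[of _ "{j. f j \<noteq> 0} \<union> {j. g j \<noteq> 0}"]) auto

lemma lfin_row: "fin x \<Longrightarrow> lfin (row x a)"
  unfolding lfin_def fin_def row_def
  by (rule finite_subset[of _ "snd ` supp x"]) (auto simp: supp_def image_iff intro: exI[of _ a])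

lemma lfin_zero: "lfin 0" by (simp add: lfin_def)
lemma lfin_delta: "lfin delta" unfolding lfin_def delta_def by (rule finite_subset[of _ "{0}"]) auto
lemma lfin_cmult: "lfin f \<Longrightarrow> lfin (\<lambda>j. c * f j)"
  unfolding lfin_def by (rule finite_subset[of _ "{j. f j \<noteq> 0}"]) auto

lemma lfin_sum: "finite S \<Longrightarrow> (\<And>s. s \<in> S \<Longrightarrow> lfin (f s)) \<Longrightarrow> lfin (sum f S)"
proof (induction S rule: finite_induct)
  case empty show ?case by (simp only: sum.empty lfin_zero)
next
  case (insert s S) thus ?case by (simp only: sum.insert[OF insert(1,2)]) (intro lfin_add; auto)
qed

lemma scl_scl: "scl (scl f a) b = scl f (a * b)"
  by (rule ext) (simp add: scl_def power_int_mult_distrib)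

lemma scl_one: "scl f 1 = f" by (rule ext) (simp add: scl_def)

lemma scl_conv:
  assumes "lfin f" "\<mu> \<noteq> 0"
  shows "scl (conv f g) \<mu> = conv (scl f \<mu>) (scl g \<mu>)"
proof (rule ext)
  fix j
  have A: "finite {k. f k \<noteq> 0}" using assms by (simp add: lfin_def)
  have "conv (scl f \<mu>) (scl g \<mu>) j = (\<Sum>k\<in>{k. f k \<noteq> 0}. scl f \<mu> k * scl g \<mu> (j - k))"
    by (rule conv_superset[OF A]) (auto simp: scl_def)
  also have "\<dots> = (\<Sum>k\<in>{k. f k \<noteq> 0}. (f k * g (j - k)) * \<mu> powi j)"
  proof (rule sum.cong[OF refl])
    fix k
    have "\<mu> powi k * \<mu> powi (j - k) = \<mu> powi j" using assms(2) by (simp add: power_int_add[symmetric])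
    thus "scl f \<mu> k * scl g \<mu> (j - k) = (f k * g (j - k)) * \<mu> powi j"
      by (simp add: scl_def algebra_simps)
  qed
  also have "\<dots> = scl (conv f g) \<mu> j" by (simp add: scl_def conv_def sum_distrib_right)
  finally show "scl (conv f g) \<mu> j = conv (scl f \<mu>) (scl g \<mu>) j" ..
qed

lemma lp_apply: "lp f c (i,j) = (if i = 0 then scl f c j else 0)"
  by (simp add: lp_def scl_def)

lemma row_lp: "row (lp f c) 0 = scl f c"
  by (rule ext) (simp add: row_def lp_apply)

lemma mult_lp_left:
  assumes ff: "lfin f" and fy: "fin y"
  shows "mult q (lp f c) y (i,j) = conv (scl f (c * q powi (2*i))) (row y i) j"
proof -
  define K where "K = {k. f k \<noteq> 0}"
  have fK: "finite K" using ff by (simp add: K_def lfin_def)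
  have "mult q (lp f c) y (i,j) = (\<Sum>p\<in>Pair 0 ` K. lp f c p * y (i - fst p, j - snd p) * q powi (2 * (i - fst p) * snd p))"
    by (rule mult_superset) (use fK supp_lp in \<open>auto simp: K_def\<close>)
  also have "\<dots> = (\<Sum>k\<in>K. f k * c powi k * y (i, j - k) * q powi (2 * i * k))"
    by (subst sum.reindex) (auto simp: inj_on_def lp_def)
  also have "\<dots> = conv (scl f (c * q powi (2*i))) (row y i) j"
    by (subst conv_superset[OF fK]) (auto simp: K_def scl_def row_def power_int_mult_distrib power_int_mult[symmetric] algebra_simps intro!: sum.cong)
  finally show ?thesis .
qed

lemma mult_lp_right:
  assumes fy: "fin y"
  shows "mult q y (lp f c) (i,j) = conv (row y i) (scl f c) j"
proof -
  define K where "K = {k. y (i,k) \<noteq> 0}"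
  have fK: "finite K" using lfin_row[OF fy, of i] by (simp add: K_def lfin_def row_def)
  have fS: "finite (supp y)" using fy by (simp add: fin_def)
  define g where "g = (\<lambda>p. y p * lp f c (i - fst p, j - snd p) * q powi (2 * (i - fst p) * snd p))"
  have "mult q y (lp f c) (i,j) = sum g (supp y \<union> Pair i ` K)"
    unfolding g_def by (rule mult_superset) (use fK fS in auto)
  also have "\<dots> = sum g (Pair i ` K)"
  proof (rule sum.mono_neutral_right)
    show "finite (supp y \<union> Pair i ` K)" using fK fS by simp
    show "\<forall>p\<in>supp y \<union> Pair i ` K - Pair i ` K. g p = 0"
    proof
      fix p assume p: "p \<in> supp y \<union> Pair i ` K - Pair i ` K"
      obtain a b where ab: "p = (a,b)" by (cases p)
      show "g p = 0"
      proof (cases "a = i")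
        case True
        hence "b \<notin> K" using p ab by auto
        thus ?thesis using True ab by (simp add: g_def K_def)
      next
        case False thus ?thesis using ab by (simp add: g_def lp_def)
      qed
    qed
  qed simp
  also have "\<dots> = (\<Sum>k\<in>K. y (i,k) * scl f c (j - k))"
    by (subst sum.reindex) (auto simp: inj_on_def g_def lp_def scl_def)
  also have "\<dots> = conv (row y i) (scl f c) j"
    by (simp add: conv_def row_def K_def)
  finally show ?thesis .
qed

lemma mult_lp_lp:
  assumes ff: "lfin f" and fg: "lfin g" and c0: "c \<noteq> 0"
  shows "mult q (lp f c) (lp g c) = lp (conv f g) c"
proof (rule ext, clarify)
  fix i j :: int
  have fy: "fin (lp g c)" using fg by (simp add: fin_lp lfin_def)
  show "mult q (lp f c) (lp g c) (i,j) = lp (conv f g) c (i,j)"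
  proof (cases "i = 0")
    case True
    thus ?thesis unfolding mult_lp_left[OF ff fy] True row_lp lp_apply
      using scl_conv[OF ff c0] by simp
  next
    case False
    have "row (lp g c) i = 0" using False by (auto simp: row_def lp_apply)
    hence "conv (scl f (c * q powi (2*i))) (row (lp g c) i) j = 0" by (simp add: conv_def)
    thus ?thesis unfolding mult_lp_left[OF ff fy] using False by (simp add: lp_apply)
  qed
qed

lemma lp_inj: "lp f 1 = lp g 1 \<Longrightarrow> f = g"
proof (rule ext)
  fix j assume "lp f 1 = lp g 1"
  hence "lp f 1 (0,j) = lp g 1 (0,j)" by simp
  thus "f j = g j" by (simp add: lp_def)
qed

lemma conv_assoc:
  assumes "lfin f" "lfin g" "lfin h"
  shows "conv (conv f g) h = conv f (conv g h)"
proof (rule lp_inj)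
  have fl: "\<And>u. lfin u \<Longrightarrow> fin (lp u 1)" by (simp add: fin_lp lfin_def)
  have "lp (conv (conv f g) h) 1 = mult 1 (lp (conv f g) 1) (lp h 1)"
    using assms by (simp add: mult_lp_lp lfin_conv)
  also have "\<dots> = mult 1 (mult 1 (lp f 1) (lp g 1)) (lp h 1)"
    using assms by (simp add: mult_lp_lp)
  also have "\<dots> = mult 1 (lp f 1) (mult 1 (lp g 1) (lp h 1))"
    using assms by (intro mult_assoc fl) auto
  also have "\<dots> = lp (conv f (conv g h)) 1"
    using assms by (simp add: mult_lp_lp lfin_conv)
  finally show "lp (conv (conv f g) h) 1 = lp (conv f (conv g h)) 1" .
qed

lemma conv_comm:
  assumes ff: "lfin f" and fg: "lfin g"
  shows "conv f g = conv g f"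
proof (rule ext)
  fix j
  define U where "U = {k. f k \<noteq> 0} \<union> (\<lambda>m. j - m) ` {k. g k \<noteq> 0}"
  define U' where "U' = {k. g k \<noteq> 0} \<union> (\<lambda>m. j - m) ` {k. f k \<noteq> 0}"
  have fU: "finite U" "finite U'" using ff fg by (auto simp: U_def U'_def lfin_def)
  have "conv f g j = (\<Sum>k\<in>U. f k * g (j - k))" by (rule conv_superset[OF fU(1)]) (auto simp: U_def)
  also have "\<dots> = (\<Sum>m\<in>U'. g m * f (j - m))"
    by (rule sum.reindex_bij_witness[of _ "\<lambda>m. j - m" "\<lambda>k. j - k"]) (auto simp: U_def U'_def image_iff)
  also have "\<dots> = conv g f j" by (rule conv_superset[OF fU(2), symmetric]) (auto simp: U'_def)
  finally show "conv f g j = conv g f j" .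
qed

lemma conv_add_right: "conv f (g + h) = conv f g + conv f h"
  by (rule ext) (simp add: conv_def sum.distrib algebra_simps)

lemma conv_zero_right: "conv f 0 = 0"
  by (rule ext) (simp add: conv_def)

lemma conv_cmult_right: "conv f (\<lambda>j. c * g j) = (\<lambda>j. c * conv f g j)"
  by (rule ext) (simp add: conv_def sum_distrib_left algebra_simps)

lemma conv_delta: "lfin f \<Longrightarrow> conv f delta = f"
proof (rule ext)
  fix j assume ff: "lfin f"
  have "conv f delta j = (\<Sum>k\<in>{k. f k \<noteq> 0}. if k = j then f j else 0)"
    unfolding conv_def by (rule sum.cong) (auto simp: delta_def)
  also have "\<dots> = f j" using ff by (simp add: sum.delta' lfin_def)
  finally show "conv f delta j = f j" .
qed

lemma pd_zero: "pd p 0"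
  unfolding pd_def using lfin_zero conv_zero_right by metis

lemma pd_self: "lfin p \<Longrightarrow> pd p p"
  unfolding pd_def using lfin_delta conv_delta by metis

lemma pd_add: "pd p f \<Longrightarrow> pd p g \<Longrightarrow> pd p (f + g)"
proof -
  assume "pd p f" "pd p g"
  then obtain s s' where s: "lfin s" "f = conv p s" "lfin s'" "g = conv p s'" unfolding pd_def by blast
  hence "f + g = conv p (s + s')" by (simp add: conv_add_right)
  moreover have "lfin (s + s')" using s by (intro lfin_add)
  ultimately show ?thesis unfolding pd_def by blast
qed

lemma pd_cmult: "pd p f \<Longrightarrow> pd p (\<lambda>j. c * f j)"
proof -
  assume "pd p f"
  then obtain s where s: "lfin s" "f = conv p s" unfolding pd_def by blast
  hence "(\<lambda>j. c * f j) = conv p (\<lambda>j. c * s j)" by (simp add: conv_cmult_right)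
  moreover have "lfin (\<lambda>j. c * s j)" using s by (intro lfin_cmult)
  ultimately show ?thesis unfolding pd_def by blast
qed

lemma pd_sum: "finite S \<Longrightarrow> (\<And>s. s \<in> S \<Longrightarrow> pd p (f s)) \<Longrightarrow> pd p (sum f S)"
proof (induction S rule: finite_induct)
  case empty show ?case by (simp only: sum.empty pd_zero)
next
  case (insert s S) thus ?case by (simp only: sum.insert[OF insert(1,2)]) (intro pd_add; auto)
qed

lemma pd_conv_right: "lfin p \<Longrightarrow> lfin g \<Longrightarrow> pd p f \<Longrightarrow> pd p (conv f g)"
proof -
  assume fp: "lfin p" and fg: "lfin g" and "pd p f"
  then obtain s where s: "lfin s" "f = conv p s" unfolding pd_def by blast
  hence "conv f g = conv p (conv s g)" using fp fg by (simp add: conv_assoc)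
  moreover have "lfin (conv s g)" using s fg by (intro lfin_conv)
  ultimately show ?thesis unfolding pd_def by blast
qed

lemma pd_conv_left: "lfin p \<Longrightarrow> lfin g \<Longrightarrow> pd p f \<Longrightarrow> pd p (conv g f)"
proof -
  assume fp: "lfin p" and fg: "lfin g" and "pd p f"
  then obtain s where s: "lfin s" "f = conv p s" unfolding pd_def by blast
  have "conv g f = conv (conv g p) s" using s fp fg by (simp add: conv_assoc)
  also have "\<dots> = conv (conv p g) s" using fp fg by (simp add: conv_comm[of g p])
  also have "\<dots> = conv p (conv g s)" using s fp fg by (simp add: conv_assoc)
  finally have "conv g f = conv p (conv g s)" .
  moreover have "lfin (conv g s)" using s fg by (intro lfin_conv)
  ultimately show ?thesis unfolding pd_def by blast
qed

lemma pd_scl: "lfin p \<Longrightarrow> \<mu> \<noteq> 0 \<Longrightarrow> pd p f \<Longrightarrow> pd (scl p \<mu>) (scl f \<mu>)"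
proof -
  assume fp: "lfin p" and m: "\<mu> \<noteq> 0" and "pd p f"
  then obtain s where s: "lfin s" "f = conv p s" unfolding pd_def by blast
  hence "scl f \<mu> = conv (scl p \<mu>) (scl s \<mu>)" using fp m by (simp add: scl_conv)
  moreover have "lfin (scl s \<mu>)" using s by (intro lfin_scl)
  ultimately show ?thesis unfolding pd_def by blast
qed

lemma row_add: "row (x + y) a = row x a + row y a" by (rule ext) (simp add: row_def)
lemma row_smul: "row (smul c x) a = (\<lambda>j. c * row x a j)" by (rule ext) (simp add: row_def smul_def)

lemma row_mult:
  assumes fx: "fin x" and fy: "fin y"
  shows "row (mult q x y) i = (\<Sum>a\<in>fst ` supp x. conv (scl (row x a) (q powi (2*(i-a)))) (row y (i-a)))"
proof (rule ext)
  fix j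
  define I where "I = fst ` supp x"
  define K where "K = snd ` supp x"
  have fI: "finite I" and fK: "finite K" using fx by (auto simp: I_def K_def fin_def)
  have sub: "supp x \<subseteq> I \<times> K" by (force simp: I_def K_def)
  have "row (mult q x y) i j = (\<Sum>p\<in>I \<times> K. x p * y (i - fst p, j - snd p) * q powi (2 * (i - fst p) * snd p))"
    unfolding row_def by (rule mult_superset) (use fI fK sub in auto)
  also have "\<dots> = (\<Sum>a\<in>I. \<Sum>c\<in>K. x (a,c) * y (i - a, j - c) * q powi (2 * (i - a) * c))"
    by (subst sum.cartesian_product) (simp add: split_def)
  also have "\<dots> = (\<Sum>a\<in>I. conv (scl (row x a) (q powi (2*(i-a)))) (row y (i-a)) j)"
  proof (rule sum.cong[OF refl])
    fix a assume "a \<in> I"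
    have "conv (scl (row x a) (q powi (2*(i-a)))) (row y (i-a)) j =
        (\<Sum>c\<in>K. scl (row x a) (q powi (2*(i-a))) c * row y (i-a) (j - c))"
    proof (rule conv_superset[OF fK], rule subsetI)
      fix c assume "c \<in> {k. scl (row x a) (q powi (2*(i-a))) k \<noteq> 0}"
      hence "(a,c) \<in> supp x" by (simp add: scl_def row_def supp_def)
      thus "c \<in> K" unfolding K_def by force
    qed
    also have "\<dots> = (\<Sum>c\<in>K. x (a,c) * y (i - a, j - c) * q powi (2 * (i - a) * c))"
      by (rule sum.cong[OF refl]) (simp add: scl_def row_def power_int_mult[symmetric] algebra_simps)
    finally show "(\<Sum>c\<in>K. x (a,c) * y (i - a, j - c) * q powi (2 * (i - a) * c)) =
        conv (scl (row x a) (q powi (2*(i-a)))) (row y (i-a)) j" ..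
  qed
  also have "\<dots> = (\<Sum>a\<in>I. conv (scl (row x a) (q powi (2*(i-a)))) (row y (i-a))) j"
    by (simp add: sum_fun_apply')
  finally show "row (mult q x y) i j = (\<Sum>a\<in>fst ` supp x. conv (scl (row x a) (q powi (2*(i-a)))) (row y (i-a))) j"
    by (simp add: I_def)
qed

definition Pk :: "complex \<Rightarrow> (int \<Rightarrow> complex) \<Rightarrow> int \<Rightarrow> int \<Rightarrow> complex" where
  "Pk q P k = scl P (q powi (1 - 2*k))"

lemma Pk_shift:
  assumes "q \<noteq> 0"
  shows "scl (Pk q P k) (q powi (2*b)) = Pk q P (k - b)"
proof -
  have "q powi (1 - 2*k) * q powi (2*b) = q powi (1 - 2*(k-b))"
    using assms by (simp add: power_int_add[symmetric] algebra_simps)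
  thus ?thesis unfolding Pk_def scl_scl by simp
qed

lemma inv_qW:
  assumes fp: "finite {j. P j \<noteq> 0}" and q0: "q \<noteq> 0"
  shows "x \<in> qWeyl q P \<Longrightarrow> \<forall>m k. 1 \<le> k \<and> k \<le> m \<longrightarrow> pd (Pk q P k) (row x (-m))"
proof (induction rule: qWeyl.induct)
  case gen_one show ?case by (auto simp: row_def mono_def pd_zero[unfolded zero_fun_def])
next
  case gen_u show ?case by (auto simp: row_def mono_def pd_zero[unfolded zero_fun_def])
next
  case gen_Z show ?case by (auto simp: row_def mono_def pd_zero[unfolded zero_fun_def])
next
  case gen_Zinv show ?case by (auto simp: row_def mono_def pd_zero[unfolded zero_fun_def])
next
  case gen_v
  show ?case
  proof (intro allI impI)
    fix m k :: int assume mk: "1 \<le> k \<and> k \<le> m"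
    show "pd (Pk q P k) (row (vgen q P) (-m))"
    proof (cases "m = 1")
      case True
      hence "k = 1" using mk by simp
      have "row (vgen q P) (-m) = Pk q P k"
        using True \<open>k = 1\<close> by (auto simp: row_def vgen_eq Pk_def scl_def power_int_minus)
      thus ?thesis using pd_self[of "Pk q P k"] lfin_scl fp by (simp add: Pk_def lfin_def)
    next
      case False
      hence "row (vgen q P) (-m) = 0" by (auto simp: row_def vgen_eq)
      thus ?thesis by (simp add: pd_zero)
    qed
  qed
next
  case (add x y) thus ?case unfolding row_add by (blast intro: pd_add)
next
  case (scal x c) thus ?case by (simp add: row_smul pd_cmult)
next
  case (mul x y)
  have fx: "fin x" and fy: "fin y" using qWeyl_fin[OF fp] mul by auto
  have fPk: "\<And>k. lfin (Pk q P k)" using fp unfolding Pk_def by (intro lfin_scl) (simp add: lfin_def)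
  show ?case
  proof (intro allI impI)
    fix m k :: int assume mk: "1 \<le> k \<and> k \<le> m"
    show "pd (Pk q P k) (row (mult q x y) (-m))"
      unfolding row_mult[OF fx fy]
    proof (rule pd_sum)
      show "finite (fst ` supp x)" using fx by (simp add: fin_def)
    next
      fix a assume "a \<in> fst ` supp x"
      show "pd (Pk q P k) (conv (scl (row x a) (q powi (2*(-m-a)))) (row y (-m-a)))"
      proof (cases "k \<le> m + a")
        case True
        have "pd (Pk q P k) (row y (-(m+a)))" using mul.IH(2) mk True by blast
        moreover have "-(m+a) = -m-a" by simp
        ultimately have "pd (Pk q P k) (row y (-m-a))" by metis
        thus ?thesis by (intro pd_conv_left fPk lfin_scl lfin_row fx) simp
      next
        case False
        define b where "b = -m-a"
        have "1 \<le> k + b \<and> k + b \<le> m + b" using mk False by (simp add: b_def)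
        hence "pd (Pk q P (k+b)) (row x (-(m+b)))" using mul.IH(1) by blast
        hence "pd (Pk q P (k+b)) (row x a)" by (simp add: b_def)
        hence "pd (scl (Pk q P (k+b)) (q powi (2*b))) (scl (row x a) (q powi (2*b)))"
          by (intro pd_scl fPk) (use q0 in simp)
        hence "pd (Pk q P (k + b - b)) (scl (row x a) (q powi (2*b)))"
          by (simp only: Pk_shift[OF q0])
        hence "pd (Pk q P k) (scl (row x a) (q powi (2*(-m-a))))"
          by (simp add: b_def)
        thus ?thesis by (intro pd_conv_right fPk lfin_row fy)
      qed
    qed
  qed
qed

lemma row_m1:
  assumes fp: "finite {j. P j \<noteq> 0}" and q0: "q \<noteq> 0" and x: "x \<in> qWeyl q P"
  shows "\<exists>s. lfin s \<and> row x (-1) = conv (scl P (q powi (-1))) s"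
  using inv_qW[OF fp q0 x] unfolding pd_def Pk_def by force

lemma powi_m1: "(q::complex) powi (-1) = inverse q"
  by (simp add: power_int_minus)

lemma rowelt0_lp: "rowelt y 0 = lp (row y 0) 1"
  by (rule ext) (auto simp: rowelt_def lp_def row_def)

lemma lp_scl: "lp f c = lp (scl f c) 1"
  by (rule ext) (auto simp: lp_def scl_def)

lemma row0_mult_u: "row (mult q (mono 1 0) b) 0 = row b (-1)"
  by (rule ext) (simp add: row_def mult_mono_left)

lemma row0_mult_b_u: "fin b \<Longrightarrow> row (mult q b (mono 1 0)) 0 = scl (row b (-1)) (q powi 2)"
  by (rule ext) (simp add: row_def mult_mono_right scl_def power_int_mult[symmetric] power_int_power)

lemma row0_mult_v:
  assumes q0: "q \<noteq> 0" and fb: "fin b" and fP: "lfin P"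
  shows "row (mult q (vgen q P) b) 0 = conv (scl P q) (row b 1)"
proof (rule ext)
  fix j
  have fL: "fin (lp P (inverse q))" using fP by (simp add: fin_lp lfin_def)
  have "mult q (vgen q P) b = mult q (mono (-1) 0) (mult q (lp P (inverse q)) b)"
    unfolding vgen_def by (rule mult_assoc[OF fin_mono fL fb q0])
  hence "row (mult q (vgen q P) b) 0 j = mult q (lp P (inverse q)) b (1, j)"
    by (simp add: row_def mult_mono_left)
  also have "\<dots> = conv (scl P (inverse q * q powi (2*1))) (row b 1) j"
    by (rule mult_lp_left[OF fP fb])
  also have "inverse q * q powi (2*1) = q" using q0 by (simp add: power2_eq_square)
  finally show "row (mult q (vgen q P) b) 0 j = conv (scl P q) (row b 1) j" .
qed

lemma row0_mult_b_v:
  assumes q0: "q \<noteq> 0" and fb: "fin b" and fP: "lfin P"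
  shows "row (mult q b (vgen q P)) 0 = conv (scl (row b 1) (q powi (-2))) (scl P (inverse q))"
proof (rule ext)
  fix j
  have fL: "fin (lp P (inverse q))" using fP by (simp add: fin_lp lfin_def)
  have fb': "fin (mult q b (mono (-1) 0))" by (intro fin_mult fb fin_mono)
  have "mult q b (vgen q P) = mult q (mult q b (mono (-1) 0)) (lp P (inverse q))"
    unfolding vgen_def by (rule mult_assoc[OF fb fin_mono fL q0, symmetric])
  hence "row (mult q b (vgen q P)) 0 j = conv (row (mult q b (mono (-1) 0)) 0) (scl P (inverse q)) j"
    by (simp add: row_def mult_lp_right[OF fb'])
  also have "row (mult q b (mono (-1) 0)) 0 = scl (row b 1) (q powi (-2))"
    by (rule ext) (simp add: row_def mult_mono_right[OF fb] scl_def power_int_mult[symmetric])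
  finally show "row (mult q b (vgen q P)) 0 j = conv (scl (row b 1) (q powi (-2))) (scl P (inverse q)) j" .
qed

lemma mult_one_left: "mult q (mono 0 0) b = b"
proof (rule ext, clarify)
  fix i j show "mult q (mono 0 0) b (i,j) = b (i,j)" by (simp add: mult_mono_left)
qed

lemma mult_one_right: "fin b \<Longrightarrow> mult q b (mono 0 0) = b"
proof (rule ext, clarify)
  fix i j assume "fin b" thus "mult q b (mono 0 0) (i,j) = b (i,j)" by (simp add: mult_mono_right)
qed

lemma smul_one: "smul 1 x = x" by (simp add: smul_def)

lemma trace_if:
  assumes fp: "finite {j. P j \<noteq> 0}" and q0: "q \<noteq> 0" and qn: "0 < norm q" "norm q < 1"
    and t0: "t \<noteq> 0"
    and l: "linear_on (qWeyl q P) T"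
    and V: "\<forall>i. i \<noteq> 0 \<longrightarrow> (\<forall>x\<in>grade q P i. T x = 0)"
    and Rc: "\<forall>R :: int \<Rightarrow> complex. finite {j. R j \<noteq> 0} \<longrightarrow>
                  T (mult q (lp P (inverse q)) (lp R (inverse q))
                     - smul t (mult q (lp P q) (lp R q))) = 0"
  shows "twisted_trace q P t T"
proof -
  have fP: "lfin P" using fp by (simp add: lfin_def)
  have iq0: "inverse q \<noteq> 0" using q0 by simp
  have TR: "\<And>x. x \<in> qWeyl q P \<Longrightarrow> T x = T (lp (row x 0) 1)"
    using T_row0[OF fp l V] by (simp add: rowelt0_lp)
  have Rc': "T (lp (scl (conv P R) (inverse q)) 1) = t * T (lp (scl (conv P R) q) 1)" if fR: "lfin R" for R
  proof -
    have fc: "finite {j. conv P R j \<noteq> 0}" using lfin_conv[OF fP fR] by (simp add: lfin_def)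
    have "T (mult q (lp P (inverse q)) (lp R (inverse q)) - smul t (mult q (lp P q) (lp R q))) = 0"
      using Rc fR by (simp add: lfin_def)
    hence "T (lp (conv P R) (inverse q) - smul t (lp (conv P R) q)) = 0"
      by (simp add: mult_lp_lp[OF fP fR iq0] mult_lp_lp[OF fP fR q0])
    hence "T (lp (conv P R) (inverse q)) - t * T (lp (conv P R) q) = 0"
      by (simp add: lin_diff[OF l] lin_smul[OF l] qW_lp[OF fc] qWeyl.scal)
    thus ?thesis by (simp add: lp_scl[symmetric])
  qed
  have main: "a \<in> qWeyl q P \<Longrightarrow> \<forall>b\<in>qWeyl q P. T (mult q a b) = T (mult q b (gt t a))" for a
  proof (induction rule: qWeyl.induct)
    case gen_one
    show ?case using mult_one_left mult_one_right qWeyl_fin[OF fp]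
      by (simp add: gt_mono smul_one)
  next
    case gen_Z
    show ?case
    proof
      fix b assume b: "b \<in> qWeyl q P"
      have fb: "fin b" using qWeyl_fin[OF fp b] .
      have "row (mult q (mono 0 1) b) 0 = row (mult q b (mono 0 1)) 0"
        by (rule ext) (simp add: row_def mult_mono_left mult_mono_right[OF fb])
      thus "T (mult q (mono 0 1) b) = T (mult q b (gt t (mono 0 1)))"
        using TR[OF qWeyl.mul[OF qWeyl.gen_Z b]] TR[OF qWeyl.mul[OF b qWeyl.gen_Z]]
        by (simp add: gt_mono smul_one)
    qed
  next
    case gen_Zinv
    show ?case
    proof
      fix b assume b: "b \<in> qWeyl q P"
      have fb: "fin b" using qWeyl_fin[OF fp b] .
      have "row (mult q (mono 0 (-1)) b) 0 = row (mult q b (mono 0 (-1))) 0"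
        by (rule ext) (simp add: row_def mult_mono_left mult_mono_right[OF fb])
      thus "T (mult q (mono 0 (-1)) b) = T (mult q b (gt t (mono 0 (-1))))"
        using TR[OF qWeyl.mul[OF qWeyl.gen_Zinv b]] TR[OF qWeyl.mul[OF b qWeyl.gen_Zinv]]
        by (simp add: gt_mono smul_one)
    qed
  next
    case gen_u
    show ?case
    proof
      fix b assume b: "b \<in> qWeyl q P"
      have fb: "fin b" using qWeyl_fin[OF fp b] .
      obtain s where s: "lfin s" "row b (-1) = conv (scl P (q powi (-1))) s"
        using row_m1[OF fp q0 b] by blast
      define R where "R = scl s q"
      have fR: "lfin R" using s by (simp add: R_def lfin_scl)
      have e1: "scl (conv P R) (inverse q) = row b (-1)"
        unfolding scl_conv[OF fP iq0] R_def scl_scl s(2) powi_m1 using q0 by (simp add: scl_one)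
      have e2: "scl (conv P R) q = scl (row b (-1)) (q powi 2)"
      proof -
        have m: "inverse q * q powi 2 = q" using q0 by (simp add: power2_eq_square)
        have "scl (conv P R) q = scl (scl (conv P R) (inverse q)) (q powi 2)"
          by (simp only: scl_scl m)
        thus ?thesis unfolding e1 .
      qed
      have "T (mult q (mono 1 0) b) = T (lp (row b (-1)) 1)"
        using TR[OF qWeyl.mul[OF qWeyl.gen_u b]] by (simp add: row0_mult_u)
      also have "\<dots> = t * T (lp (scl (row b (-1)) (q powi 2)) 1)"
        using Rc'[OF fR] unfolding e1 e2 .
      also have "\<dots> = t * T (mult q b (mono 1 0))"
        using TR[OF qWeyl.mul[OF b qWeyl.gen_u]] by (simp add: row0_mult_b_u[OF fb])
      also have "\<dots> = T (mult q b (gt t (mono 1 0)))"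
        by (simp add: gt_mono mult_smul_right lin_smul[OF l qWeyl.mul[OF b qWeyl.gen_u]])
      finally show "T (mult q (mono 1 0) b) = T (mult q b (gt t (mono 1 0)))" .
    qed
  next
    case gen_v
    show ?case
    proof
      fix b assume b: "b \<in> qWeyl q P"
      have fb: "fin b" using qWeyl_fin[OF fp b] .
      define s where "s = row b 1"
      have fs: "lfin s" using lfin_row[OF fb] by (simp add: s_def)
      define R where "R = scl s (inverse q)"
      have fR: "lfin R" using fs by (simp add: R_def lfin_scl)
      have e1: "scl (conv P R) q = conv (scl P q) s"
        unfolding scl_conv[OF fP q0] R_def scl_scl using q0 by (simp add: scl_one)
      have e2: "scl (conv P R) (inverse q) = conv (scl s (q powi (-2))) (scl P (inverse q))"
      proof -
        have "inverse q * inverse q = q powi (-2)" using q0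
          by (simp add: power_int_minus power2_eq_square)
        hence "scl (conv P R) (inverse q) = conv (scl P (inverse q)) (scl s (q powi (-2)))"
          unfolding scl_conv[OF fP iq0] R_def scl_scl by simp
        also have "\<dots> = conv (scl s (q powi (-2))) (scl P (inverse q))"
          by (rule conv_comm) (intro lfin_scl fP fs)+
        finally show ?thesis .
      qed
      have vq: "vgen q P \<in> qWeyl q P" by (rule qWeyl.gen_v)
      have "T (mult q (vgen q P) b) = T (lp (conv (scl P q) s) 1)"
        using TR[OF qWeyl.mul[OF vq b]] by (simp add: row0_mult_v[OF q0 fb fP] s_def)
      also have "\<dots> = inverse t * (t * T (lp (scl (conv P R) q) 1))"
        using t0 e1 by simp
      also have "\<dots> = inverse t * T (lp (conv (scl s (q powi (-2))) (scl P (inverse q))) 1)"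
        using Rc'[OF fR] e2 by simp
      also have "\<dots> = inverse t * T (mult q b (vgen q P))"
        using TR[OF qWeyl.mul[OF b vq]] by (simp add: row0_mult_b_v[OF q0 fb fP] s_def)
      also have "\<dots> = T (mult q b (gt t (vgen q P)))"
        by (simp add: gt_vgen mult_smul_right lin_smul[OF l qWeyl.mul[OF b vq]] powi_m1)
      finally show "T (mult q (vgen q P) b) = T (mult q b (gt t (vgen q P)))" .
    qed
  next
    case (add x y)
    show ?case
    proof
      fix b assume b: "b \<in> qWeyl q P"
      have fx: "fin x" "fin y" using qWeyl_fin[OF fp] add by auto
      have gx: "gt t x \<in> qWeyl q P" "gt t y \<in> qWeyl q P" using gt_qW[OF fp t0] add by auto
      have "T (mult q (x + y) b) = T (mult q x b + mult q y b)" by (simp only: mult_add_left[OF fx])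
      also have "\<dots> = T (mult q x b) + T (mult q y b)"
        by (rule lin_add[OF l]) (intro qWeyl.mul add b)+
      also have "\<dots> = T (mult q b (gt t x)) + T (mult q b (gt t y))" using add.IH b by simp
      also have "\<dots> = T (mult q b (gt t x) + mult q b (gt t y))"
        by (rule lin_add[OF l, symmetric]) (intro qWeyl.mul gx b)+
      also have "\<dots> = T (mult q b (gt t (x + y)))" by (simp only: gt_add mult_add_right)
      finally show "T (mult q (x + y) b) = T (mult q b (gt t (x + y)))" .
    qed
  next
    case (scal x c)
    show ?case
    proof
      fix b assume b: "b \<in> qWeyl q P"
      have fx: "fin x" using qWeyl_fin[OF fp] scal by auto
      have gx: "gt t x \<in> qWeyl q P" using gt_qW[OF fp t0] scal by auto
      have "T (mult q (smul c x) b) = c * T (mult q x b)"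
        by (simp only: mult_smul_left[OF fx] lin_smul[OF l qWeyl.mul[OF scal.hyps b]])
      also have "\<dots> = c * T (mult q b (gt t x))" using scal.IH b by simp
      also have "\<dots> = T (mult q b (gt t (smul c x)))"
        by (simp only: gt_smul mult_smul_right lin_smul[OF l qWeyl.mul[OF b gx]])
      finally show "T (mult q (smul c x) b) = T (mult q b (gt t (smul c x)))" .
    qed
  next
    case (mul x y)
    show ?case
    proof
      fix b assume b: "b \<in> qWeyl q P"
      have fx: "fin x" "fin y" "fin b" using qWeyl_fin[OF fp] mul b by auto
      have gx: "gt t x \<in> qWeyl q P" "gt t y \<in> qWeyl q P" using gt_qW[OF fp t0] mul by auto
      have fg: "fin (gt t x)" "fin (gt t y)" using qWeyl_fin[OF fp] gx by auto
      have "T (mult q (mult q x y) b) = T (mult q x (mult q y b))"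
        by (simp only: mult_assoc[OF fx q0])
      also have "\<dots> = T (mult q (mult q y b) (gt t x))"
        using mul.IH(1) qWeyl.mul[OF mul.hyps(2) b] by blast
      also have "\<dots> = T (mult q y (mult q b (gt t x)))"
        by (simp only: mult_assoc[OF fx(2,3) fg(1) q0])
      also have "\<dots> = T (mult q (mult q b (gt t x)) (gt t y))"
        using mul.IH(2) qWeyl.mul[OF b gx(1)] by blast
      also have "\<dots> = T (mult q b (mult q (gt t x) (gt t y)))"
        by (simp only: mult_assoc[OF fx(3) fg q0])
      also have "\<dots> = T (mult q b (gt t (mult q x y)))"
        by (simp only: gt_mult[OF fx(1) t0])
      finally show "T (mult q (mult q x y) b) = T (mult q b (gt t (mult q x y)))" .
    qed
  qed
  show ?thesis unfolding twisted_trace_def using main by blast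
qed

lemma trace_only_if:
  assumes fp: "finite {j. P j \<noteq> 0}" and qn: "0 < norm q" "norm q < 1"
    and t0: "t \<noteq> 0"
    and l: "linear_on (qWeyl q P) T"
    and tt: "twisted_trace q P t T"
  shows "(\<forall>i. i \<noteq> 0 \<longrightarrow> (\<forall>x\<in>grade q P i. T x = 0)) \<and>
         (\<forall>R :: int \<Rightarrow> complex. finite {j. R j \<noteq> 0} \<longrightarrow>
                  T (mult q (lp P (inverse q)) (lp R (inverse q))
                     - smul t (mult q (lp P q) (lp R q))) = 0)"
proof (intro conjI allI impI ballI)
  have q0: "q \<noteq> 0" using qn by auto
  have fP: "lfin P" using fp by (simp add: lfin_def)
  have TT: "\<And>a b. a \<in> qWeyl q P \<Longrightarrow> b \<in> qWeyl q P \<Longrightarrow> T (mult q a b) = T (mult q b (gt t a))"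
    using tt unfolding twisted_trace_def by blast
  fix i x assume i0: "i \<noteq> 0" and xg: "x \<in> grade q P i"
  have x: "x \<in> qWeyl q P" and ge: "mult q (mult q (mono 0 1) x) (mono 0 (-1)) = smul (q powi (2 * i)) x"
    using xg unfolding grade_def by auto
  have fx: "fin x" using qWeyl_fin[OF fp x] .
  define b where "b = mult q x (mono 0 (-1))"
  have b: "b \<in> qWeyl q P" unfolding b_def by (intro qWeyl.mul x qWeyl.gen_Zinv)
  have "mult q (mono 0 1) b = smul (q powi (2 * i)) x"
    unfolding b_def ge[symmetric] by (rule mult_assoc[symmetric, OF fin_mono fx fin_mono q0])
  moreover have "mult q b (mono 0 1) = x"
  proof -
    have "mult q b (mono 0 1) = mult q x (mult q (mono 0 (-1)) (mono 0 1))"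
      unfolding b_def by (rule mult_assoc[OF fx fin_mono fin_mono q0])
    also have "mult q (mono 0 (-1)) (mono 0 1) = mono 0 0" by (simp add: mono_mult_mono smul_one)
    finally show ?thesis using mult_one_right[OF fx] by simp
  qed
  moreover have "gt t (mono 0 1) = mono 0 1" by (simp add: gt_mono smul_one)
  ultimately have "T (smul (q powi (2 * i)) x) = T x" using TT[OF qWeyl.gen_Z b] by simp
  hence "(q powi (2 * i) - 1) * T x = 0" using lin_smul[OF l x] by (simp add: algebra_simps)
  moreover have "q powi (2 * i) \<noteq> 1" using powi_ne_one[OF qn] i0 by simp
  ultimately show "T x = 0" by simp
next
  have q0: "q \<noteq> 0" using qn by auto
  have fP: "lfin P" using fp by (simp add: lfin_def)
  have TT: "\<And>a b. a \<in> qWeyl q P \<Longrightarrow> b \<in> qWeyl q P \<Longrightarrow> T (mult q a b) = T (mult q b (gt t a))"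
    using tt unfolding twisted_trace_def by blast
  fix R :: "int \<Rightarrow> complex" assume fR': "finite {j. R j \<noteq> 0}"
  have fR: "lfin R" using fR' by (simp add: lfin_def)
  have iq0: "inverse q \<noteq> 0" using q0 by simp
  define LP where "LP = lp P (inverse q)"
  define LR where "LR = lp R (inverse q)"
  have fLP: "fin LP" "fin LR" using fp fR' by (auto simp: LP_def LR_def fin_lp)
  have fc: "finite {j. conv P R j \<noteq> 0}" using lfin_conv[OF fP fR] by (simp add: lfin_def)
  define b where "b = mult q (vgen q P) LR"
  have b: "b \<in> qWeyl q P" unfolding b_def LR_def by (intro qWeyl.mul qWeyl.gen_v qW_lp fR')
  have fb: "fin b" using qWeyl_fin[OF fp b] .
  have X: "mult q (mono 1 0) b = mult q LP LR"
  proof -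
    have "mult q (mono 1 0) (vgen q P) = mult q (mult q (mono 1 0) (mono (-1) 0)) LP"
      unfolding vgen_def LP_def[symmetric] by (rule mult_assoc[symmetric, OF fin_mono fin_mono fLP(1) q0])
    also have "mult q (mono 1 0) (mono (-1) 0) = mono 0 0" by (simp add: mono_mult_mono smul_one)
    finally have uv: "mult q (mono 1 0) (vgen q P) = LP" by (simp add: mult_one_left)
    have "mult q (mono 1 0) b = mult q (mult q (mono 1 0) (vgen q P)) LR"
      unfolding b_def by (rule mult_assoc[symmetric, OF fin_mono fin_vgen[OF fp] fLP(2) q0])
    thus ?thesis using uv by simp
  qed
  have Y: "mult q b (gt t (mono 1 0)) = smul t (lp (conv P R) q)"
  proof -
    have bb: "b = mult q (mono (-1) 0) (lp (conv P R) (inverse q))"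
    proof -
      have "b = mult q (mono (-1) 0) (mult q LP LR)"
        unfolding b_def vgen_def LP_def[symmetric] by (rule mult_assoc[OF fin_mono fLP q0])
      thus ?thesis unfolding LP_def LR_def mult_lp_lp[OF fP fR iq0] .
    qed
    have "mult q b (mono 1 0) = lp (conv P R) q"
    proof (rule ext, clarify)
      fix i j :: int
      have p2': "q powi (j + j) = q powi j * q powi j" by (rule power_int_add) (simp add: q0)
      have jj: "2 * j = j + j" by simp
      have p2: "q powi (2 * j) = q powi j * q powi j" unfolding jj by (rule p2')
      have nz: "q powi j \<noteq> 0" using q0 by simp
      have pw: "inverse q powi j * q powi (2 * j) = q powi j"
        unfolding p2 power_int_inverse using nz by (simp add: mult.assoc[symmetric])
      have e1: "mult q b (mono 1 0) (i,j) = b (i - 1, j - 0) * q powi (2 * 1 * (j - 0))"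
        by (rule mult_mono_right[OF fb])
      have e2: "b (i - 1, j - 0) = lp (conv P R) (inverse q) (i - 1 - (-1), j - 0 - 0) * q powi (2 * (i - 1 - (-1)) * 0)"
        unfolding bb by (rule mult_mono_left)
      have e3: "mult q b (mono 1 0) (i,j) = lp (conv P R) (inverse q) (i, j) * q powi (2 * j)"
        unfolding e1 e2 by simp
      show "mult q b (mono 1 0) (i,j) = lp (conv P R) q (i,j)"
      proof (cases "i = 0")
        case True
        have "mult q b (mono 1 0) (i,j) = conv P R j * (inverse q powi j * q powi (2 * j))"
          unfolding e3 using True by (simp add: lp_def)
        thus ?thesis unfolding pw using True by (simp add: lp_def)
      next
        case False
        thus ?thesis unfolding e3 by (simp add: lp_def)
      qed
    qed
    thus ?thesis by (simp add: gt_mono mult_smul_right)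
  qed
  have "T (mult q LP LR) = T (smul t (lp (conv P R) q))"
    using TT[OF qWeyl.gen_u b] X Y by simp
  moreover have "mult q (lp P q) (lp R q) = lp (conv P R) q" by (rule mult_lp_lp[OF fP fR q0])
  moreover have "mult q LP LR \<in> qWeyl q P" unfolding LP_def LR_def by (intro qWeyl.mul qW_lp fp fR')
  moreover have "smul t (lp (conv P R) q) \<in> qWeyl q P" by (intro qWeyl.scal qW_lp fc)
  ultimately show "T (mult q (lp P (inverse q)) (lp R (inverse q)) - smul t (mult q (lp P q) (lp R q))) = 0"
    unfolding LP_def[symmetric] LR_def[symmetric] by (simp add: lin_diff[OF l])
qed

function fwd :: "(nat \<Rightarrow> nat \<Rightarrow> complex) \<Rightarrow> nat \<Rightarrow> (nat \<Rightarrow> complex) \<Rightarrow> nat \<Rightarrow> complex" where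
  "fwd A d w i = (if i < d then w i else - (\<Sum>e\<in>{1..d}. A i e * fwd A d w (i - e)))"
  by pat_completeness auto
termination by (relation "measure (\<lambda>(A,d,w,i). i)") auto

declare fwd.simps[simp del]

lemma fwd_low: "i < d \<Longrightarrow> fwd A d w i = w i"
  by (simp add: fwd.simps)

lemma fwd_high: "\<not> i < d \<Longrightarrow> fwd A d w i = - (\<Sum>e\<in>{1..d}. A i e * fwd A d w (i - e))"
  by (subst fwd.simps) simp

lemma sum_top:
  fixes g :: "int \<Rightarrow> complex" and l k :: int and n :: nat
  assumes "k - l = int n"
  shows "(\<Sum>c\<in>{l..k}. g c) = g k + (\<Sum>e\<in>{1..n}. g (k - int e))"
proof -
  have "{l..k} = insert k {l..<k}" using assms by auto
  hence "(\<Sum>c\<in>{l..k}. g c) = g k + (\<Sum>c\<in>{l..<k}. g c)" by simp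
  also have "(\<Sum>c\<in>{l..<k}. g c) = (\<Sum>e\<in>{1..n}. g (k - int e))"
    by (rule sum.reindex_bij_witness[of _ "\<lambda>e. k - int e" "\<lambda>c. nat (k - c)"]) (use assms in auto)
  finally show ?thesis .
qed

lemma sum_bot:
  fixes g :: "int \<Rightarrow> complex" and l k :: int and n :: nat
  assumes "k - l = int n"
  shows "(\<Sum>c\<in>{l..k}. g c) = g l + (\<Sum>e\<in>{1..n}. g (l + int e))"
proof -
  have "{l..k} = insert l {l<..k}" using assms by auto
  hence "(\<Sum>c\<in>{l..k}. g c) = g l + (\<Sum>c\<in>{l<..k}. g c)" by simp
  also have "(\<Sum>c\<in>{l<..k}. g c) = (\<Sum>e\<in>{1..n}. g (l + int e))"
    by (rule sum.reindex_bij_witness[of _ "\<lambda>e. l + int e" "\<lambda>c. nat (c - l)"]) (use assms in auto)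
  finally show ?thesis .
qed

locale qw =
  fixes P :: "int \<Rightarrow> complex" and q t :: complex
  assumes fp: "finite {j. P j \<noteq> 0}" and ne: "{j. P j \<noteq> 0} \<noteq> {}" and sp: "lspan P > 0"
    and qn: "0 < norm q" "norm q < 1" and t0: "t \<noteq> 0"

context qw
begin

definition kk :: int where "kk = Max {j. P j \<noteq> 0}"
definition ll :: int where "ll = Min {j. P j \<noteq> 0}"
definition lam :: "int \<Rightarrow> complex" where "lam j = q powi (-j) - t * q powi j"
definition NN :: int where "NN = (if \<exists>j. lam j = 0 then (SOME j. lam j = 0) else 0)"

lemma Pkk: "P kk \<noteq> 0" unfolding kk_def using Max_in[OF fp ne] by simp
lemma Pll: "P ll \<noteq> 0" unfolding ll_def using Min_in[OF fp ne] by simp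
lemma P_out: "P c \<noteq> 0 \<Longrightarrow> ll \<le> c \<and> c \<le> kk"
  unfolding ll_def kk_def using fp by (auto intro: Min_le Max_ge)
lemma span_eq: "kk - ll = int (lspan P)"
  using sp unfolding lspan_def kk_def ll_def by simp
lemma span_pos: "lspan P \<ge> 1" using sp by simp

lemma lam_unique: "lam a = 0 \<Longrightarrow> lam b = 0 \<Longrightarrow> a = b"
proof -
  assume a: "lam a = 0" and b: "lam b = 0"
  have q0: "q \<noteq> 0" using qn by auto
  have "\<And>j. lam j = 0 \<Longrightarrow> t = q powi (-2 * j)"
  proof -
    fix j assume "lam j = 0"
    hence "q powi (-j) = t * q powi j" by (simp add: lam_def)
    hence "t = q powi (-j) / q powi j" using q0 by (simp add: field_simps)
    also have "\<dots> = q powi (-j - j)" by (rule power_int_diff[symmetric]) (simp add: q0)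
    also have "-j - j = -2 * j" by simp
    finally show "t = q powi (-2 * j)" .
  qed
  hence "q powi (-2 * a) = q powi (-2 * b)" using a b by metis
  hence "-2 * a = -2 * b" by (rule powi_inj[OF qn])
  thus "a = b" by simp
qed

lemma lam_ne: "j < NN \<or> NN + int (lspan P) \<le> j \<Longrightarrow> lam j \<noteq> 0"
proof
  assume j: "j < NN \<or> NN + int (lspan P) \<le> j" and l0: "lam j = 0"
  hence ex: "\<exists>j. lam j = 0" by blast
  hence "NN = (SOME j. lam j = 0)" by (simp add: NN_def)
  hence "lam NN = 0" using someI_ex[OF ex] by simp
  hence "NN = j" using lam_unique l0 by blast
  thus False using j span_pos by simp
qed

definition Rec :: "(int \<Rightarrow> complex) \<Rightarrow> bool" where
  "Rec \<tau> \<longleftrightarrow> (\<forall>m. (\<Sum>c\<in>{ll..kk}. P c * lam (m + c) * \<tau> (m + c)) = 0)"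

definition Af :: "nat \<Rightarrow> nat \<Rightarrow> complex" where
  "Af i e = P (kk - int e) * lam (NN + int i - int e) / (P kk * lam (NN + int i))"
definition Ab :: "nat \<Rightarrow> nat \<Rightarrow> complex" where
  "Ab i e = P (ll + int e) * lam (NN + int (lspan P) - 1 - int i + int e) / (P ll * lam (NN + int (lspan P) - 1 - int i))"

definition sol :: "(nat \<Rightarrow> complex) \<Rightarrow> int \<Rightarrow> complex" where
  "sol w j = (if NN \<le> j then fwd Af (lspan P) w (nat (j - NN))
              else fwd Ab (lspan P) (\<lambda>i. w (lspan P - 1 - i)) (nat (NN + int (lspan P) - 1 - j)))"

lemma sol_window: "i < lspan P \<Longrightarrow> sol w (NN + int i) = w i"
  by (simp add: sol_def fwd_low)

lemma sol_high: "NN \<le> j \<Longrightarrow> sol w j = fwd Af (lspan P) w (nat (j - NN))"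
  by (simp add: sol_def)

lemma sol_low: "j \<le> NN + int (lspan P) - 1 \<Longrightarrow>
   sol w j = fwd Ab (lspan P) (\<lambda>i. w (lspan P - 1 - i)) (nat (NN + int (lspan P) - 1 - j))"
proof (cases "NN \<le> j")
  case True
  assume j: "j \<le> NN + int (lspan P) - 1"
  have a: "nat (j - NN) < lspan P" using True j by simp
  have b: "nat (NN + int (lspan P) - 1 - j) < lspan P" using True j by simp
  have c: "lspan P - 1 - nat (NN + int (lspan P) - 1 - j) = nat (j - NN)" using True j by simp
  have "sol w j = w (nat (j - NN))" using True by (simp add: sol_def fwd_low[OF a])
  also have "\<dots> = w (lspan P - 1 - nat (NN + int (lspan P) - 1 - j))" by (simp only: c)
  also have "\<dots> = fwd Ab (lspan P) (\<lambda>i. w (lspan P - 1 - i)) (nat (NN + int (lspan P) - 1 - j))"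
    by (rule fwd_low[OF b, symmetric])
  finally show ?thesis .
next
  case False thus ?thesis by (simp add: sol_def)
qed

lemma Rec_sol: "Rec (sol w)"
  unfolding Rec_def
proof
  fix m
  define n where "n = lspan P"
  have kl: "kk - ll = int n" using span_eq by (simp add: n_def)
  have n1: "n \<ge> 1" using span_pos by (simp add: n_def)
  show "(\<Sum>c\<in>{ll..kk}. P c * lam (m + c) * sol w (m + c)) = 0"
  proof (cases "NN + int n \<le> m + kk")
    case True
    define i where "i = nat (m + kk - NN)"
    have ii: "int i = m + kk - NN" "\<not> i < n" using True n1 by (auto simp: i_def)
    have lm: "lam (NN + int i) \<noteq> 0" using lam_ne ii by (simp add: n_def)
    have Pk: "P kk \<noteq> 0" by (rule Pkk)
    have s1: "sol w (m + kk - int e) = fwd Af n w (i - e)" if "e \<in> {1..n}" for e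
    proof -
      have "NN \<le> m + kk - int e" using that ii kl True by simp
      moreover have "nat (m + kk - int e - NN) = i - e" using that ii by auto
      ultimately show ?thesis by (simp add: sol_high n_def)
    qed
    have s0: "sol w (m + kk) = fwd Af n w i"
      using True ii n1 by (simp add: sol_high n_def i_def)
    have "(\<Sum>c\<in>{ll..kk}. P c * lam (m + c) * sol w (m + c)) =
       P kk * lam (m + kk) * sol w (m + kk) + (\<Sum>e\<in>{1..n}. P (kk - int e) * lam (m + (kk - int e)) * sol w (m + (kk - int e)))"
      by (rule sum_top[OF kl])
    also have "\<dots> = P kk * lam (NN + int i) * fwd Af n w i +
        (\<Sum>e\<in>{1..n}. (P kk * lam (NN + int i)) * (Af i e * fwd Af n w (i - e)))"
    proof -
      have "(\<Sum>e\<in>{1..n}. P (kk - int e) * lam (m + (kk - int e)) * sol w (m + (kk - int e))) =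
            (\<Sum>e\<in>{1..n}. (P kk * lam (NN + int i)) * (Af i e * fwd Af n w (i - e)))"
      proof (rule sum.cong[OF refl])
        fix e assume e: "e \<in> {1..n}"
        have "m + (kk - int e) = NN + int i - int e" using ii by simp
        thus "P (kk - int e) * lam (m + (kk - int e)) * sol w (m + (kk - int e)) =
            (P kk * lam (NN + int i)) * (Af i e * fwd Af n w (i - e))"
          using s1[OF e] lm Pk by (simp add: Af_def algebra_simps)
      qed
      moreover have "m + kk = NN + int i" using ii by simp
      ultimately show ?thesis using s0 by simp
    qed
    also have "\<dots> = P kk * lam (NN + int i) * (fwd Af n w i + (\<Sum>e\<in>{1..n}. Af i e * fwd Af n w (i - e)))"
      by (simp add: sum_distrib_left algebra_simps)
    also have "\<dots> = 0" using fwd_high[OF ii(2), of Af w] by simp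
    finally show ?thesis .
  next
    case False
    define i where "i = nat (NN + int n - 1 - (m + ll))"
    have ml: "m + ll < NN" using False kl by linarith
    have ii0: "int i = NN + int n - 1 - (m + ll)" unfolding i_def using ml by linarith
    have ii: "int i = NN + int n - 1 - (m + ll)" "\<not> i < n" using ii0 ml by linarith+
    have lt: "NN + int n - 1 - int i < NN" using ii0 ml by linarith
    have lm: "lam (NN + int n - 1 - int i) \<noteq> 0" using lam_ne lt by blast
    have Pl: "P ll \<noteq> 0" by (rule Pll)
    have s1: "sol w (m + ll + int e) = fwd Ab n (\<lambda>i. w (n - 1 - i)) (i - e)" if "e \<in> {1..n}" for e
    proof -
      have "m + ll + int e \<le> NN + int n - 1" using that ii kl False by simp
      moreover have "nat (NN + int n - 1 - (m + ll + int e)) = i - e" using that ii by auto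
      ultimately show ?thesis by (simp add: sol_low n_def)
    qed
    have s0: "sol w (m + ll) = fwd Ab n (\<lambda>i. w (n - 1 - i)) i"
    proof -
      have "m + ll \<le> NN + int n - 1" using False kl by simp
      thus ?thesis by (simp add: sol_low n_def i_def)
    qed
    have "(\<Sum>c\<in>{ll..kk}. P c * lam (m + c) * sol w (m + c)) =
       P ll * lam (m + ll) * sol w (m + ll) + (\<Sum>e\<in>{1..n}. P (ll + int e) * lam (m + (ll + int e)) * sol w (m + (ll + int e)))"
      by (rule sum_bot[OF kl])
    also have "\<dots> = P ll * lam (NN + int n - 1 - int i) * fwd Ab n (\<lambda>i. w (n - 1 - i)) i +
        (\<Sum>e\<in>{1..n}. (P ll * lam (NN + int n - 1 - int i)) * (Ab i e * fwd Ab n (\<lambda>i. w (n - 1 - i)) (i - e)))"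
    proof -
      have "(\<Sum>e\<in>{1..n}. P (ll + int e) * lam (m + (ll + int e)) * sol w (m + (ll + int e))) =
            (\<Sum>e\<in>{1..n}. (P ll * lam (NN + int n - 1 - int i)) * (Ab i e * fwd Ab n (\<lambda>i. w (n - 1 - i)) (i - e)))"
      proof (rule sum.cong[OF refl])
        fix e assume e: "e \<in> {1..n}"
        have a1: "m + (ll + int e) = NN + int n - 1 - int i + int e" using ii by simp
        have a2: "sol w (m + (ll + int e)) = fwd Ab n (\<lambda>i. w (n - 1 - i)) (i - e)"
          using s1[OF e] by (simp add: add.assoc)
        have nz: "P ll * lam (NN + int n - 1 - int i) \<noteq> 0" using lm Pl by simp
        have a3: "(P ll * lam (NN + int n - 1 - int i)) * Ab i e = P (ll + int e) * lam (NN + int n - 1 - int i + int e)"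
        proof -
          have gen: "\<And>a b :: complex. a \<noteq> 0 \<Longrightarrow> a * (b / a) = b" by simp
          show ?thesis unfolding Ab_def n_def[symmetric] by (rule gen[OF nz])
        qed
        show "P (ll + int e) * lam (m + (ll + int e)) * sol w (m + (ll + int e)) =
            (P ll * lam (NN + int n - 1 - int i)) * (Ab i e * fwd Ab n (\<lambda>i. w (n - 1 - i)) (i - e))"
        proof -
          have a2': "sol w (NN + int n - 1 - int i + int e) = fwd Ab n (\<lambda>i. w (n - 1 - i)) (i - e)"
            using a2 unfolding a1 .
          show ?thesis unfolding a1 a2' mult.assoc[symmetric] a3 ..
        qed
      qed
      moreover have "m + ll = NN + int n - 1 - int i" using ii by simp
      ultimately show ?thesis using s0 by simp
    qed
    also have "\<dots> = P ll * lam (NN + int n - 1 - int i) * (fwd Ab n (\<lambda>i. w (n - 1 - i)) i +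
        (\<Sum>e\<in>{1..n}. Ab i e * fwd Ab n (\<lambda>i. w (n - 1 - i)) (i - e)))"
      by (simp add: sum_distrib_left algebra_simps)
    also have "\<dots> = 0" using fwd_high[OF ii(2), of Ab "\<lambda>i. w (n - 1 - i)"] by simp
    finally show ?thesis .
  qed
qed

end

definition LF :: "(int \<Rightarrow> complex) \<Rightarrow> (int \<Rightarrow> complex) \<Rightarrow> complex" where
  "LF \<tau> f = (\<Sum>j\<in>{j. f j \<noteq> 0}. f j * \<tau> j)"

lemma LF_superset:
  assumes "finite A" "{j. f j \<noteq> 0} \<subseteq> A"
  shows "LF \<tau> f = (\<Sum>j\<in>A. f j * \<tau> j)"
  unfolding LF_def by (rule sum.mono_neutral_left[OF assms]) auto

lemma LF_add:
  assumes "lfin f" "lfin g"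
  shows "LF \<tau> (f + g) = LF \<tau> f + LF \<tau> g"
proof -
  let ?A = "{j. f j \<noteq> 0} \<union> {j. g j \<noteq> 0}"
  have fA: "finite ?A" using assms by (simp add: lfin_def)
  show ?thesis
    by (subst (1 2 3) LF_superset[OF fA]) (auto simp: sum.distrib algebra_simps)
qed

lemma LF_cmult:
  assumes "lfin f"
  shows "LF \<tau> (\<lambda>j. c * f j) = c * LF \<tau> f"
proof -
  have fA: "finite {j. f j \<noteq> 0}" using assms by (simp add: lfin_def)
  show ?thesis
    by (subst (1 2) LF_superset[OF fA]) (auto simp: sum_distrib_left algebra_simps)
qed

lemma LF_zero: "LF \<tau> 0 = 0" by (simp add: LF_def)

lemma LF_sum: "finite S \<Longrightarrow> (\<And>s. s \<in> S \<Longrightarrow> lfin (f s)) \<Longrightarrow> LF \<tau> (sum f S) = (\<Sum>s\<in>S. LF \<tau> (f s))"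
proof (induction S rule: finite_induct)
  case empty show ?case by (simp only: sum.empty LF_zero)
next
  case (insert s S)
  have "LF \<tau> (sum f (insert s S)) = LF \<tau> (f s + sum f S)" by (simp only: sum.insert[OF insert(1,2)])
  also have "\<dots> = LF \<tau> (f s) + LF \<tau> (sum f S)"
    using insert by (intro LF_add lfin_sum) auto
  also have "\<dots> = LF \<tau> (f s) + (\<Sum>s\<in>S. LF \<tau> (f s))" using insert by simp
  also have "\<dots> = (\<Sum>s\<in>insert s S. LF \<tau> (f s))" by (simp add: sum.insert[OF insert(1,2)])
  finally show ?case .
qed

lemma LF_delta: "LF \<tau> (\<lambda>j. if j = m then 1 else 0) = \<tau> m"
  by (subst LF_superset[of "{m}"]) auto

lemma LF_tau_sum:
  assumes "lfin f"
  shows "LF (\<lambda>j. \<Sum>s\<in>S. c s * g s j) f = (\<Sum>s\<in>S. c s * LF (g s) f)"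
  unfolding LF_def by (simp add: sum_distrib_left sum.swap[of _ S] algebra_simps)

lemma LF_tau_diff: "LF (\<lambda>j. a j - b j) f = LF a f - LF b f"
  unfolding LF_def by (simp add: sum_subtractf algebra_simps)

lemma row_mono0: "row (mono 0 j) 0 = (\<lambda>j'. if j' = j then 1 else 0)"
  by (rule ext) (simp add: row_def mono_def)

lemma row_diff: "row (x - y) a = (\<lambda>j. row x a j - row y a j)" by (rule ext) (simp add: row_def)

lemma grade_row0:
  assumes qn: "0 < norm q" "norm q < 1" and fp: "finite {j. P j \<noteq> 0}"
    and x: "x \<in> grade q P i" and i0: "i \<noteq> 0"
  shows "row x 0 = 0"
proof (rule ext)
  fix j
  have xq: "x \<in> qWeyl q P" and ge: "mult q (mult q (mono 0 1) x) (mono 0 (-1)) = smul (q powi (2 * i)) x"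
    using x unfolding grade_def by auto
  have fx: "fin x" using qWeyl_fin[OF fp xq] .
  have "mult q (mult q (mono 0 1) x) (mono 0 (-1)) (0,j) = x (0,j)"
    unfolding mult_mono_right[OF fin_mult[OF fin_mono fx]] mult_mono_left by simp
  hence "q powi (2 * i) * x (0,j) = x (0,j)" using ge by (simp add: smul_def fun_eq_iff)
  hence "(q powi (2 * i) - 1) * x (0,j) = 0" by (simp add: algebra_simps)
  moreover have "q powi (2 * i) \<noteq> 1" using powi_ne_one[OF qn] i0 by simp
  ultimately show "row x 0 j = 0 j" by (simp add: row_def)
qed

context qw
begin

definition RS :: "(int \<Rightarrow> complex) \<Rightarrow> int \<Rightarrow> complex" where
  "RS \<tau> m = (\<Sum>c\<in>{ll..kk}. P c * lam (m + c) * \<tau> (m + c))"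

lemma Rec_RS: "Rec \<tau> \<longleftrightarrow> (\<forall>m. RS \<tau> m = 0)" by (simp add: Rec_def RS_def)

lemma lfinP: "lfin P" using fp by (simp add: lfin_def)

lemma LF_shift: "LF \<tau> (\<lambda>j. P (j - m) * lam j) = RS \<tau> m"
proof -
  have fA: "finite ((\<lambda>c. m + c) ` {ll..kk})" by simp
  have "LF \<tau> (\<lambda>j. P (j - m) * lam j) = (\<Sum>j\<in>(\<lambda>c. m + c) ` {ll..kk}. P (j - m) * lam j * \<tau> j)"
  proof (rule LF_superset[OF fA], rule subsetI)
    fix j assume "j \<in> {j. P (j - m) * lam j \<noteq> 0}"
    hence "P (j - m) \<noteq> 0" by simp
    hence "ll \<le> j - m \<and> j - m \<le> kk" by (rule P_out)
    thus "j \<in> (\<lambda>c. m + c) ` {ll..kk}" by (auto intro: image_eqI[of _ _ "j - m"])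
  qed
  also have "\<dots> = (\<Sum>c\<in>{ll..kk}. P c * lam (m + c) * \<tau> (m + c))"
    by (subst sum.reindex) (auto simp: inj_on_def)
  finally show ?thesis by (simp add: RS_def)
qed

lemma lfin_shiftP: "lfin (\<lambda>j. R m * (P (j - m) * lam j))"
proof -
  have "{j. R m * (P (j - m) * lam j) \<noteq> 0} \<subseteq> (\<lambda>c. c + m) ` {j. P j \<noteq> 0}"
    by (auto intro: image_eqI[of _ _ "_ - m"])
  moreover have "finite ((\<lambda>c. c + m) ` {j. P j \<noteq> 0})" using fp by simp
  ultimately show ?thesis unfolding lfin_def by (rule finite_subset)
qed

lemma RecR_expand:
  assumes fR: "lfin R"
  shows "LF \<tau> (\<lambda>j. conv P R j * lam j) = (\<Sum>m\<in>{m. R m \<noteq> 0}. R m * RS \<tau> m)"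
proof -
  have eqf: "(\<lambda>j. conv P R j * lam j) = (\<Sum>m\<in>{m. R m \<noteq> 0}. (\<lambda>j. R m * (P (j - m) * lam j)))"
  proof (rule ext)
    fix j
    have "conv P R j = conv R P j" by (simp add: conv_comm[OF lfinP fR])
    thus "conv P R j * lam j = (\<Sum>m\<in>{m. R m \<noteq> 0}. (\<lambda>j. R m * (P (j - m) * lam j))) j"
      by (simp add: sum_fun_apply' conv_def sum_distrib_left mult.commute mult.left_commute)
  qed
  have "LF \<tau> (\<lambda>j. conv P R j * lam j) = (\<Sum>m\<in>{m. R m \<noteq> 0}. LF \<tau> (\<lambda>j. R m * (P (j - m) * lam j)))"
  proof -
    have "finite {m. R m \<noteq> 0}" using fR by (simp add: lfin_def)
    thus ?thesis unfolding eqf by (rule LF_sum) (rule lfin_shiftP)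
  qed
  also have "\<dots> = (\<Sum>m\<in>{m. R m \<noteq> 0}. R m * RS \<tau> m)"
  proof (rule sum.cong[OF refl])
    fix m
    have l: "lfin (\<lambda>j. P (j - m) * lam j)" using lfin_shiftP[of "\<lambda>_. 1" m] by simp
    show "LF \<tau> (\<lambda>j. R m * (P (j - m) * lam j)) = R m * RS \<tau> m"
      using LF_cmult[OF l, of \<tau> "R m"] LF_shift by simp
  qed
  finally show ?thesis .
qed

end

context qw
begin

lemma q0: "q \<noteq> 0" using qn by auto

lemma Rec_unique:
  assumes R: "Rec \<tau>" and w: "\<forall>i<lspan P. \<tau> (NN + int i) = 0"
  shows "\<tau> j = 0"
proof -
  define n where "n = lspan P"
  have kl: "kk - ll = int n" using span_eq by (simp add: n_def)
  have n1: "n \<ge> 1" using span_pos by (simp add: n_def)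
  have RS0: "\<And>m. RS \<tau> m = 0" using R by (simp add: Rec_RS)
  have fw: "\<tau> (NN + int i) = 0" for i
  proof (induction i rule: less_induct)
    case (less i)
    show ?case
    proof (cases "i < n")
      case True thus ?thesis using w by (simp add: n_def)
    next
      case False
      define m where "m = NN + int i - kk"
      have "RS \<tau> m = P kk * lam (m + kk) * \<tau> (m + kk) + (\<Sum>e\<in>{1..n}. P (kk - int e) * lam (m + (kk - int e)) * \<tau> (m + (kk - int e)))"
        unfolding RS_def by (rule sum_top[OF kl])
      also have "(\<Sum>e\<in>{1..n}. P (kk - int e) * lam (m + (kk - int e)) * \<tau> (m + (kk - int e))) = 0"
      proof (rule sum.neutral, rule ballI)
        fix e assume e: "e \<in> {1..n}"
        have "m + (kk - int e) = NN + int (i - e)" using e False by (simp add: m_def)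
        moreover have lt: "i - e < i" using e False by simp
        moreover have "\<tau> (NN + int (i - e)) = 0" by (rule less[OF lt])
        ultimately show "P (kk - int e) * lam (m + (kk - int e)) * \<tau> (m + (kk - int e)) = 0" by simp
      qed
      finally have "P kk * lam (NN + int i) * \<tau> (NN + int i) = 0" using RS0 by (simp add: m_def)
      moreover have "lam (NN + int i) \<noteq> 0" using lam_ne False by (simp add: n_def)
      ultimately show ?thesis using Pkk by simp
    qed
  qed
  have bw: "\<tau> (NN + int n - 1 - int i) = 0" for i
  proof (induction i rule: less_induct)
    case (less i)
    show ?case
    proof (cases "i < n")
      case True
      have e: "NN + int n - 1 - int i = NN + int (n - 1 - i)" using True by simp
      have "n - 1 - i < lspan P" using True by (simp add: n_def)
      hence "\<tau> (NN + int (n - 1 - i)) = 0" using w by blast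
      thus ?thesis unfolding e .
    next
      case False
      define m where "m = NN + int n - 1 - int i - ll"
      have "RS \<tau> m = P ll * lam (m + ll) * \<tau> (m + ll) + (\<Sum>e\<in>{1..n}. P (ll + int e) * lam (m + (ll + int e)) * \<tau> (m + (ll + int e)))"
        unfolding RS_def by (rule sum_bot[OF kl])
      also have "(\<Sum>e\<in>{1..n}. P (ll + int e) * lam (m + (ll + int e)) * \<tau> (m + (ll + int e))) = 0"
      proof (rule sum.neutral, rule ballI)
        fix e assume e: "e \<in> {1..n}"
        have "m + (ll + int e) = NN + int n - 1 - int (i - e)" using e False by (simp add: m_def)
        moreover have lt: "i - e < i" using e False by simp
        moreover have "\<tau> (NN + int n - 1 - int (i - e)) = 0" by (rule less[OF lt])
        ultimately show "P (ll + int e) * lam (m + (ll + int e)) * \<tau> (m + (ll + int e)) = 0" by simp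
      qed
      finally have "P ll * lam (NN + int n - 1 - int i) * \<tau> (NN + int n - 1 - int i) = 0" using RS0 by (simp add: m_def)
      moreover have "lam (NN + int n - 1 - int i) \<noteq> 0" using lam_ne False by (simp add: n_def)
      ultimately show ?thesis using Pll by simp
    qed
  qed
  show ?thesis
  proof (cases "NN \<le> j")
    case True
    hence "j = NN + int (nat (j - NN))" by simp
    thus ?thesis using fw by metis
  next
    case False
    hence "j = NN + int n - 1 - int (nat (NN + int n - 1 - j))" using n1 by simp
    thus ?thesis using bw by metis
  qed
qed

lemma Rec_lincomb:
  assumes "\<And>s. s \<in> S \<Longrightarrow> Rec (g s)"
  shows "Rec (\<lambda>j. \<Sum>s\<in>S. c s * g s j)"
proof -
  have "RS (\<lambda>j. \<Sum>s\<in>S. c s * g s j) m = (\<Sum>s\<in>S. c s * RS (g s) m)" for m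
    unfolding RS_def by (simp add: sum_distrib_left sum.swap[of _ S] algebra_simps)
  thus ?thesis using assms by (simp add: Rec_RS)
qed

lemma Rec_diff: "Rec a \<Longrightarrow> Rec b \<Longrightarrow> Rec (\<lambda>j. a j - b j)"
proof -
  assume a: "Rec a" and b: "Rec b"
  have "RS (\<lambda>j. a j - b j) m = RS a m - RS b m" for m
    unfolding RS_def by (simp add: sum_subtractf[symmetric] algebra_simps)
  thus ?thesis using a b by (simp add: Rec_RS)
qed

definition Tt :: "(int \<Rightarrow> complex) \<Rightarrow> elt \<Rightarrow> complex" where
  "Tt \<tau> x = (if x \<in> qWeyl q P then LF \<tau> (row x 0) else 0)"

lemma Tt_lin: "linear_on (qWeyl q P) (Tt \<tau>)"
  unfolding linear_on_def
proof (intro conjI ballI allI)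
  fix x y assume x: "x \<in> qWeyl q P" and y: "y \<in> qWeyl q P"
  have lx: "lfin (row x 0)" "lfin (row y 0)" using lfin_row qWeyl_fin[OF fp] x y by auto
  show "Tt \<tau> (x + y) = Tt \<tau> x + Tt \<tau> y"
    using x y qWeyl.add[OF x y] by (simp add: Tt_def row_add LF_add[OF lx])
next
  fix c x assume x: "x \<in> qWeyl q P"
  have lx: "lfin (row x 0)" using lfin_row qWeyl_fin[OF fp] x by auto
  show "Tt \<tau> (smul c x) = c * Tt \<tau> x"
    using x qWeyl.scal[OF x] by (simp add: Tt_def row_smul LF_cmult[OF lx])
qed

lemma XY_qW: "lfin R \<Longrightarrow> mult q (lp P (inverse q)) (lp R (inverse q)) - smul t (mult q (lp P q) (lp R q)) \<in> qWeyl q P"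
  using fp by (intro qW_diff qWeyl.mul qWeyl.scal qW_lp) (auto simp: lfin_def)

lemma row_XY:
  assumes fR: "lfin R"
  shows "row (mult q (lp P (inverse q)) (lp R (inverse q)) - smul t (mult q (lp P q) (lp R q))) 0 = (\<lambda>j. conv P R j * lam j)"
proof (rule ext)
  fix j
  have iq0: "inverse q \<noteq> 0" using q0 by simp
  have "inverse q powi j = q powi (-j)" by (simp add: power_int_inverse power_int_minus)
  thus "row (mult q (lp P (inverse q)) (lp R (inverse q)) - smul t (mult q (lp P q) (lp R q))) 0 j = conv P R j * lam j"
    by (simp add: row_diff row_smul mult_lp_lp[OF lfinP fR iq0] mult_lp_lp[OF lfinP fR q0] row_lp scl_def lam_def algebra_simps)
qed

lemma Tt_XY:
  assumes fR: "lfin R"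
  shows "Tt \<tau> (mult q (lp P (inverse q)) (lp R (inverse q)) - smul t (mult q (lp P q) (lp R q))) = (\<Sum>m\<in>{m. R m \<noteq> 0}. R m * RS \<tau> m)"
  using XY_qW[OF fR] by (simp add: Tt_def row_XY[OF fR] RecR_expand[OF fR])

lemma Tt_in_S:
  assumes R: "Rec \<tau>"
  shows "linear_on (qWeyl q P) (Tt \<tau>) \<and> twisted_trace q P t (Tt \<tau>) \<and> (\<forall>x. x \<notin> qWeyl q P \<longrightarrow> Tt \<tau> x = 0)"
proof (intro conjI allI impI)
  show "linear_on (qWeyl q P) (Tt \<tau>)" by (rule Tt_lin)
  show "twisted_trace q P t (Tt \<tau>)"
  proof (rule trace_if[OF fp q0 qn t0 Tt_lin])
    show "\<forall>i. i \<noteq> 0 \<longrightarrow> (\<forall>x\<in>grade q P i. Tt \<tau> x = 0)"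
    proof (intro allI impI ballI)
      fix i x assume i0: "i \<noteq> 0" and xg: "x \<in> grade q P i"
      have xq: "x \<in> qWeyl q P" using xg by (simp add: grade_def)
      have "row x 0 = 0" by (rule grade_row0[OF qn fp xg i0])
      thus "Tt \<tau> x = 0" using xq by (simp add: Tt_def LF_zero)
    qed
    show "\<forall>R. finite {j. R j \<noteq> 0} \<longrightarrow>
      Tt \<tau> (mult q (lp P (inverse q)) (lp R (inverse q)) - smul t (mult q (lp P q) (lp R q))) = 0"
    proof (intro allI impI)
      fix R :: "int \<Rightarrow> complex" assume "finite {j. R j \<noteq> 0}"
      hence fR: "lfin R" by (simp add: lfin_def)
      have "\<forall>m. RS \<tau> m = 0" using R by (simp add: Rec_RS)
      thus "Tt \<tau> (mult q (lp P (inverse q)) (lp R (inverse q)) - smul t (mult q (lp P q) (lp R q))) = 0"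
        unfolding Tt_XY[OF fR] by simp
    qed
  qed
  fix x assume "x \<notin> qWeyl q P" thus "Tt \<tau> x = 0" by (simp add: Tt_def)
qed

lemma T_char:
  assumes l: "linear_on (qWeyl q P) T" and tt: "twisted_trace q P t T"
    and z: "\<forall>x. x \<notin> qWeyl q P \<longrightarrow> T x = 0"
  shows "Rec (\<lambda>j. T (mono 0 j)) \<and> T = Tt (\<lambda>j. T (mono 0 j))"
proof -
  define \<tau> where "\<tau> = (\<lambda>j. T (mono 0 j))"
  have VR: "(\<forall>i. i \<noteq> 0 \<longrightarrow> (\<forall>x\<in>grade q P i. T x = 0)) \<and>
         (\<forall>R :: int \<Rightarrow> complex. finite {j. R j \<noteq> 0} \<longrightarrow>
                  T (mult q (lp P (inverse q)) (lp R (inverse q))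
                     - smul t (mult q (lp P q) (lp R q))) = 0)"
    by (rule trace_only_if[OF fp qn t0 l tt])
  have TT: "T x = Tt \<tau> x" for x
  proof (cases "x \<in> qWeyl q P")
    case True
    have fr: "finite {j. row x 0 j \<noteq> 0}" using lfin_row[OF qWeyl_fin[OF fp True]] by (simp add: lfin_def)
    have "T x = T (rowelt x 0)" by (rule T_row0[OF fp l conjunct1[OF VR] True])
    hence "T x = T (lp (row x 0) 1)" by (simp only: rowelt0_lp)
    also have "\<dots> = T (\<Sum>j\<in>{j. row x 0 j \<noteq> 0}. smul (row x 0 j * 1 powi j) (mono 0 j))"
      by (simp only: lp_as_sum[OF fr])
    also have "\<dots> = (\<Sum>j\<in>{j. row x 0 j \<noteq> 0}. T (smul (row x 0 j * 1 powi j) (mono 0 j)))"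
      by (rule lin_sum[OF l fr]) (intro qWeyl.scal qW_mono0)
    also have "\<dots> = (\<Sum>j\<in>{j. row x 0 j \<noteq> 0}. row x 0 j * \<tau> j)"
      by (rule sum.cong[OF refl]) (simp add: lin_smul[OF l qW_mono0] \<tau>_def)
    also have "\<dots> = Tt \<tau> x" using True by (simp add: Tt_def LF_def)
    finally show ?thesis .
  next
    case False thus ?thesis using z by (simp add: Tt_def)
  qed
  have "Rec \<tau>" unfolding Rec_RS
  proof
    fix m
    define R :: "int \<Rightarrow> complex" where "R = (\<lambda>j. if j = m then 1 else 0)"
    have fR: "lfin R" unfolding lfin_def R_def by (rule finite_subset[of _ "{m}"]) auto
    have SR: "{j. R j \<noteq> 0} = {m}" by (auto simp: R_def)
    have z0: "T (mult q (lp P (inverse q)) (lp R (inverse q)) - smul t (mult q (lp P q) (lp R q))) = 0"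
      using conjunct2[OF VR] fR unfolding lfin_def by blast
    have "T (mult q (lp P (inverse q)) (lp R (inverse q)) - smul t (mult q (lp P q) (lp R q))) = RS \<tau> m"
      unfolding TT Tt_XY[OF fR] SR by (simp add: R_def)
    thus "RS \<tau> m = 0" using z0 by simp
  qed
  moreover have "T = Tt \<tau>" using TT by (rule ext)
  ultimately show ?thesis unfolding \<tau>_def[symmetric] by blast
qed

lemma Tt_mono: "Tt \<tau> (mono 0 j) = \<tau> j"
  by (simp add: Tt_def qW_mono0 row_mono0 LF_delta)

lemma Tt_tau_sum: "Tt (\<lambda>j. \<Sum>s\<in>S. c s * g s j) x = (\<Sum>s\<in>S. c s * Tt (g s) x)"
proof (cases "x \<in> qWeyl q P")
  case True
  have lx: "lfin (row x 0)" using lfin_row qWeyl_fin[OF fp] True by auto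
  show ?thesis using True by (simp add: Tt_def LF_tau_sum[OF lx])
qed (simp add: Tt_def)

lemma Tt_cong: "(\<And>j. a j = b j) \<Longrightarrow> Tt a = Tt b"
proof -
  assume "\<And>j. a j = b j" hence "a = b" by (rule ext)
  thus ?thesis by simp
qed

end

lemma vs_fun: "vector_space (\<lambda>c (f :: elt \<Rightarrow> complex) x. c * f x)"
  by unfold_locales (auto simp: fun_eq_iff algebra_simps)

context qw
begin

definition Tb :: "nat \<Rightarrow> elt \<Rightarrow> complex" where
  "Tb r = Tt (sol (\<lambda>i. if i = r then 1 else 0))"

lemma Tb_eval: "r' < lspan P \<Longrightarrow> Tb r (mono 0 (NN + int r')) = (if r' = r then 1 else 0)"
  by (simp add: Tb_def Tt_mono sol_window)

lemma Tb_inj: "inj_on Tb {..<lspan P}"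
proof (rule inj_onI)
  fix r1 r2 assume r1: "r1 \<in> {..<lspan P}" and r2: "r2 \<in> {..<lspan P}" and e: "Tb r1 = Tb r2"
  have "Tb r1 (mono 0 (NN + int r1)) = 1" using r1 by (simp add: Tb_eval)
  moreover have "Tb r2 (mono 0 (NN + int r1)) = (if r1 = r2 then 1 else 0)" using r1 by (simp add: Tb_eval)
  ultimately show "r1 = r2" using e by (auto split: if_splits)
qed

lemma dim_S:
  "vector_space.dim (\<lambda>c (f :: elt \<Rightarrow> complex) x. c * f x)
     {T. linear_on (qWeyl q P) T \<and> twisted_trace q P t T \<and> (\<forall>x. x \<notin> qWeyl q P \<longrightarrow> T x = 0)} = lspan P"
proof -
  interpret V: vector_space "\<lambda>c (f :: elt \<Rightarrow> complex) x. c * f x" by (rule vs_fun)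
  define S where "S = {T. linear_on (qWeyl q P) T \<and> twisted_trace q P t T \<and> (\<forall>x. x \<notin> qWeyl q P \<longrightarrow> T x = 0)}"
  define n where "n = lspan P"
  define B where "B = Tb ` {..<n}"
  have inj: "inj_on Tb {..<n}" using Tb_inj by (simp add: n_def)
  have cardB: "card B = n" unfolding B_def using card_image[OF inj] by simp
  have BS: "B \<subseteq> S"
  proof
    fix T assume "T \<in> B"
    then obtain r where "T = Tb r" unfolding B_def by blast
    thus "T \<in> S" unfolding S_def Tb_def using Tt_in_S[OF Rec_sol] by simp
  qed
  have SB: "S \<subseteq> V.span B"
  proof
    fix T assume "T \<in> S"
    hence l: "linear_on (qWeyl q P) T" and tt: "twisted_trace q P t T" and z: "\<forall>x. x \<notin> qWeyl q P \<longrightarrow> T x = 0"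
      unfolding S_def by blast+
    define \<tau> where "\<tau> = (\<lambda>j. T (mono 0 j))"
    have ch0: "Rec \<tau> \<and> T = Tt \<tau>" using T_char[OF l tt z] unfolding \<tau>_def[symmetric] .
    have ch: "Rec \<tau>" "T = Tt \<tau>" using ch0 by (rule conjunct1, rule conjunct2)
    define c where "c = (\<lambda>r. \<tau> (NN + int r))"
    define \<sigma> where "\<sigma> = (\<lambda>j. \<Sum>r\<in>{..<n}. c r * sol (\<lambda>i. if i = r then 1 else 0) j)"
    have Rs: "Rec \<sigma>" unfolding \<sigma>_def by (rule Rec_lincomb) (rule Rec_sol)
    have "Rec (\<lambda>j. \<tau> j - \<sigma> j)" by (rule Rec_diff[OF ch(1) Rs])
    moreover have "\<forall>i<lspan P. \<tau> (NN + int i) - \<sigma> (NN + int i) = 0"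
    proof (intro allI impI)
      fix i assume i: "i < lspan P"
      have "\<sigma> (NN + int i) = (\<Sum>r\<in>{..<n}. c r * (if i = r then 1 else 0))"
        unfolding \<sigma>_def using i by (simp add: sol_window)
      also have "\<dots> = (\<Sum>r\<in>{..<n}. if r = i then c i else 0)" by (rule sum.cong) auto
      also have "\<dots> = c i" using i by (simp add: n_def)
      finally show "\<tau> (NN + int i) - \<sigma> (NN + int i) = 0" by (simp add: c_def)
    qed
    ultimately have eq: "\<And>j. \<tau> j - \<sigma> j = 0" using Rec_unique[of "\<lambda>j. \<tau> j - \<sigma> j"] by blast
    have "T = Tt \<sigma>" unfolding ch(2) by (rule Tt_cong) (use eq in simp)
    also have "\<dots> = (\<Sum>r\<in>{..<n}. (\<lambda>x. c r * Tb r x))"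
    proof (rule ext)
      fix x
      show "Tt \<sigma> x = (\<Sum>r\<in>{..<n}. (\<lambda>x. c r * Tb r x)) x"
        unfolding \<sigma>_def Tt_tau_sum by (simp add: sum_fun_apply' Tb_def)
    qed
    finally have Teq: "T = (\<Sum>r\<in>{..<n}. (\<lambda>x. c r * Tb r x))" .
    show "T \<in> V.span B" unfolding Teq
    proof (rule V.span_sum)
      fix r assume "r \<in> {..<n}"
      hence "Tb r \<in> B" by (simp add: B_def)
      thus "(\<lambda>x. c r * Tb r x) \<in> V.span B" by (intro V.span_scale V.span_base)
    qed
  qed
  have indep: "V.independent B"
  proof
    assume dep: "V.dependent B"
    have fB: "finite B" by (simp add: B_def)
    have "\<exists>u. (\<exists>v\<in>B. u v \<noteq> 0) \<and> (\<Sum>v\<in>B. (\<lambda>x. u v * v x)) = 0"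
      by (rule V.dependent_finite[OF fB, THEN iffD1, OF dep])
    then obtain u where u: "(\<exists>v\<in>B. u v \<noteq> 0) \<and> (\<Sum>v\<in>B. (\<lambda>x. u v * v x)) = 0" ..
    have u1: "\<exists>v\<in>B. u v \<noteq> 0" using u by (rule conjunct1)
    have u2: "(\<Sum>v\<in>B. (\<lambda>x. u v * v x)) = 0" using u by (rule conjunct2)
    have su: "(\<Sum>r\<in>{..<n}. (\<lambda>x. u (Tb r) * Tb r x)) = 0"
      using u2 unfolding B_def sum.reindex[OF inj] comp_def .
    have "u (Tb r0) = 0" if r0: "r0 < n" for r0
    proof -
      have "(\<Sum>r\<in>{..<n}. (\<lambda>x. u (Tb r) * Tb r x)) (mono 0 (NN + int r0)) =
            (\<Sum>r\<in>{..<n}. u (Tb r) * Tb r (mono 0 (NN + int r0)))"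
        by (rule sum_fun_apply')
      also have "\<dots> = (\<Sum>r\<in>{..<n}. if r = r0 then u (Tb r0) else 0)"
      proof (rule sum.cong[OF refl])
        fix r assume "r \<in> {..<n}"
        have "Tb r (mono 0 (NN + int r0)) = (if r0 = r then 1 else 0)"
          by (rule Tb_eval) (use r0 in \<open>simp add: n_def\<close>)
        thus "u (Tb r) * Tb r (mono 0 (NN + int r0)) = (if r = r0 then u (Tb r0) else 0)" by auto
      qed
      also have "\<dots> = u (Tb r0)" using r0 by (simp add: sum.delta)
      finally show ?thesis using su by simp
    qed
    thus False using u1 by (auto simp: B_def)
  qed
  have "card B = V.dim S" by (rule V.basis_card_eq_dim[OF BS SB indep])
  thus ?thesis using cardB by (simp add: S_def n_def)
qed

end

theorem proposition2p1:
  fixes q t :: complex and P :: "int \<Rightarrow> complex"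
  assumes "0 < norm q" and "norm q < 1"
    and "finite {j. P j \<noteq> 0}" and "{j. P j \<noteq> 0} \<noteq> {}"
    and "lspan P > 0"
    and "t \<noteq> 0"
  shows "(\<forall>T. linear_on (qWeyl q P) T \<longrightarrow>
            (twisted_trace q P t T \<longleftrightarrow>
              ((\<forall>i. i \<noteq> 0 \<longrightarrow> (\<forall>x\<in>grade q P i. T x = 0)) \<and>
               (\<forall>R :: int \<Rightarrow> complex. finite {j. R j \<noteq> 0} \<longrightarrow>
                  T (mult q (lp P (inverse q)) (lp R (inverse q))
                     - smul t (mult q (lp P q) (lp R q))) = 0))))
       \<and> vector_space.dim (\<lambda>c (f :: elt \<Rightarrow> complex) x. c * f x)
           {T. linear_on (qWeyl q P) T \<and> twisted_trace q P t T
               \<and> (\<forall>x. x \<notin> qWeyl q P \<longrightarrow> T x = 0)} = lspan P"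
proof -
  interpret qw P q t by unfold_locales (use assms in auto)
  have q0: "q \<noteq> 0" using assms(1) by auto
  show ?thesis
  proof (intro conjI allI impI)
    fix T assume l: "linear_on (qWeyl q P) T"
    show "twisted_trace q P t T \<longleftrightarrow>
              ((\<forall>i. i \<noteq> 0 \<longrightarrow> (\<forall>x\<in>grade q P i. T x = 0)) \<and>
               (\<forall>R :: int \<Rightarrow> complex. finite {j. R j \<noteq> 0} \<longrightarrow>
                  T (mult q (lp P (inverse q)) (lp R (inverse q))
                     - smul t (mult q (lp P q) (lp R q))) = 0))"
    proof
      assume tt: "twisted_trace q P t T"
      show "(\<forall>i. i \<noteq> 0 \<longrightarrow> (\<forall>x\<in>grade q P i. T x = 0)) \<and>
               (\<forall>R :: int \<Rightarrow> complex. finite {j. R j \<noteq> 0} \<longrightarrow>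
                  T (mult q (lp P (inverse q)) (lp R (inverse q))
                     - smul t (mult q (lp P q) (lp R q))) = 0)"
        by (rule trace_only_if[OF assms(3) assms(1) assms(2) assms(6) l tt])
    next
      assume h: "(\<forall>i. i \<noteq> 0 \<longrightarrow> (\<forall>x\<in>grade q P i. T x = 0)) \<and>
               (\<forall>R :: int \<Rightarrow> complex. finite {j. R j \<noteq> 0} \<longrightarrow>
                  T (mult q (lp P (inverse q)) (lp R (inverse q))
                     - smul t (mult q (lp P q) (lp R q))) = 0)"
      show "twisted_trace q P t T"
        by (rule trace_if[OF assms(3) q0 assms(1) assms(2) assms(6) l conjunct1[OF h] conjunct2[OF h]])
    qed
  next
    show "vector_space.dim (\<lambda>c (f :: elt \<Rightarrow> complex) x. c * f x)
           {T. linear_on (qWeyl q P) T \<and> twisted_trace q P t T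
               \<and> (\<forall>x. x \<notin> qWeyl q P \<longrightarrow> T x = 0)} = lspan P"
      by (rule dim_S)
  qed
qed

end
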